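(* Let $m\geq3$ be odd, let $M(m)$ be the monoid with generators $\rho_1,\rho_2$ and the single relation $\rho_1\rho_2^{(m-1)/2}\rho_1=\rho_2^{(m+1)/2}$, and set $\Delta:=\rho_2^{\,m}$. Then $(M(m),\Delta)$ is a Garside monoid, and its group of fractions is the group $B(m)$ defined by the same presentation (which is isomorphic to the Artin–Tits group of dihedral type $I_2(m)$).
   Context: A Garside monoid is a pair $(M,\Delta)$ with $M$ a monoid and $\Delta\in M$ such that: (1) $M$ is left- and right-cancellative; (2) divisibility in $M$ is Noetherian, i.e. there is $\lambda:M\to\mathbb{Z}_{\geq 0}$ with $\lambda(ab)\geq\lambda(a)+\lambda(b)$ for all $a,b$ and $\lambda(a)\neq 0$ for $a\neq 1$; (3) any two elements of $M$ admit a left-lcm, a right-lcm, a left-gcd and a right-gcd (with respect to right- resp. left-divisibility as appropriate, where $a$ left-divides $c$ if $c=ab$ and $b$ right-divides $c$ if $c=ab$); (4) the left-divisors and the right-divisors of $\Delta$ coincide and generate $M$; (5) the set of divisors of $\Delta$ is finite. *)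

theory Defs
  imports "HOL-Algebra.Group"
begin

inductive_set pres_cong :: "('a list \<times> 'a list) set \<Rightarrow> ('a list \<times> 'a list) set"
  for R :: "('a list \<times> 'a list) set" where
  base: "(u, v) \<in> R \<Longrightarrow> (u, v) \<in> pres_cong R"
| refl: "(u, u) \<in> pres_cong R"
| sym: "(u, v) \<in> pres_cong R \<Longrightarrow> (v, u) \<in> pres_cong R"
| trans: "(u, v) \<in> pres_cong R \<Longrightarrow> (v, w) \<in> pres_cong R \<Longrightarrow> (u, w) \<in> pres_cong R"
| ctx: "(u, v) \<in> pres_cong R \<Longrightarrow> (x @ u @ y, x @ v @ y) \<in> pres_cong R"

definition pres_monoid :: "('a list \<times> 'a list) set \<Rightarrow> 'a list set monoid" where
  "pres_monoid R =
     \<lparr> carrier = UNIV // pres_cong R,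
       mult = (\<lambda>A B. pres_cong R `` {u @ v | u v. u \<in> A \<and> v \<in> B}),
       one = pres_cong R `` {[]} \<rparr>"

text \<open>Group presentation: letters (a, True) = a, (a, False) = a inverse;
  relations R plus the free-group cancellation relations.\<close>
definition group_rels :: "('a list \<times> 'a list) set \<Rightarrow> (('a \<times> bool) list \<times> ('a \<times> bool) list) set" where
  "group_rels R = {(map (\<lambda>a. (a, True)) u, map (\<lambda>a. (a, True)) v) | u v. (u, v) \<in> R}
                \<union> {([(a, b), (a, \<not> b)], []) | a b. True}"

definition pres_group :: "('a list \<times> 'a list) set \<Rightarrow> ('a \<times> bool) list set monoid" where
  "pres_group R = pres_monoid (group_rels R)"

definition pres_incl :: "('a list \<times> 'a list) set \<Rightarrow> 'a list set \<Rightarrow> ('a \<times> bool) list set" where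
  "pres_incl R A = pres_cong (group_rels R) `` (map (\<lambda>a. (a, True)) ` A)"

definition ldvd :: "('a, 'b) monoid_scheme \<Rightarrow> 'a \<Rightarrow> 'a \<Rightarrow> bool" where
  "ldvd M a c \<longleftrightarrow> (\<exists>b \<in> carrier M. c = a \<otimes>\<^bsub>M\<^esub> b)"

definition rdvd :: "('a, 'b) monoid_scheme \<Rightarrow> 'a \<Rightarrow> 'a \<Rightarrow> bool" where
  "rdvd M b c \<longleftrightarrow> (\<exists>a \<in> carrier M. c = a \<otimes>\<^bsub>M\<^esub> b)"

definition has_lcms_gcds :: "'a set \<Rightarrow> ('a \<Rightarrow> 'a \<Rightarrow> bool) \<Rightarrow> bool" where
  "has_lcms_gcds S P \<longleftrightarrow>
     (\<forall>a \<in> S. \<forall>b \<in> S.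
        (\<exists>c \<in> S. P a c \<and> P b c \<and> (\<forall>d \<in> S. P a d \<and> P b d \<longrightarrow> P c d)) \<and>
        (\<exists>c \<in> S. P c a \<and> P c b \<and> (\<forall>d \<in> S. P d a \<and> P d b \<longrightarrow> P d c)))"

definition garside_monoid :: "('a, 'b) monoid_scheme \<Rightarrow> 'a \<Rightarrow> bool" where
  "garside_monoid M \<Delta> \<longleftrightarrow>
     monoid M \<and> \<Delta> \<in> carrier M \<and>
     \<comment> \<open>(1) cancellativity\<close>
     (\<forall>a \<in> carrier M. \<forall>b \<in> carrier M. \<forall>c \<in> carrier M.
        (a \<otimes>\<^bsub>M\<^esub> b = a \<otimes>\<^bsub>M\<^esub> c \<longrightarrow> b = c) \<and>
        (b \<otimes>\<^bsub>M\<^esub> a = c \<otimes>\<^bsub>M\<^esub> a \<longrightarrow> b = c)) \<and>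
     \<comment> \<open>(2) Noetherian divisibility\<close>
     (\<exists>len :: 'a \<Rightarrow> nat.
        (\<forall>a \<in> carrier M. \<forall>b \<in> carrier M. len (a \<otimes>\<^bsub>M\<^esub> b) \<ge> len a + len b) \<and>
        (\<forall>a \<in> carrier M. a \<noteq> \<one>\<^bsub>M\<^esub> \<longrightarrow> len a \<noteq> 0)) \<and>
     \<comment> \<open>(3) lcms and gcds for both divisibility relations\<close>
     has_lcms_gcds (carrier M) (ldvd M) \<and>
     has_lcms_gcds (carrier M) (rdvd M) \<and>
     \<comment> \<open>(4) left and right divisors of Delta coincide and generate M\<close>
     {a \<in> carrier M. ldvd M a \<Delta>} = {a \<in> carrier M. rdvd M a \<Delta>} \<and>
     (\<forall>x \<in> carrier M. \<exists>l. set l \<subseteq> {a \<in> carrier M. ldvd M a \<Delta>} \<and>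
                            x = foldr (\<lambda>a b. a \<otimes>\<^bsub>M\<^esub> b) l \<one>\<^bsub>M\<^esub>) \<and>
     \<comment> \<open>(5) finitely many divisors of Delta\<close>
     finite {a \<in> carrier M. ldvd M a \<Delta>}"

definition group_of_fractions ::
  "('g, 'c) monoid_scheme \<Rightarrow> ('a, 'b) monoid_scheme \<Rightarrow> ('a \<Rightarrow> 'g) \<Rightarrow> bool" where
  "group_of_fractions G M i \<longleftrightarrow>
     group G \<and> i \<in> hom M G \<and> i \<one>\<^bsub>M\<^esub> = \<one>\<^bsub>G\<^esub> \<and> inj_on i (carrier M) \<and>
     (\<forall>g \<in> carrier G. \<exists>a \<in> carrier M. \<exists>b \<in> carrier M.
        g = i a \<otimes>\<^bsub>G\<^esub> inv\<^bsub>G\<^esub> (i b))"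

datatype gen2 = R1 | R2

definition rel_M :: "nat \<Rightarrow> (gen2 list \<times> gen2 list) set" where
  "rel_M m = {([R1] @ replicate ((m - 1) div 2) R2 @ [R1], replicate ((m + 1) div 2) R2)}"

definition M_mon :: "nat \<Rightarrow> gen2 list set monoid" where
  "M_mon m = pres_monoid (rel_M m)"

definition Delta :: "nat \<Rightarrow> gen2 list set" where
  "Delta m = pres_cong (rel_M m) `` {replicate m R2}"

definition B_grp :: "nat \<Rightarrow> (gen2 \<times> bool) list set monoid" where
  "B_grp m = pres_group (rel_M m)"

definition alt_word :: "'a \<Rightarrow> 'a \<Rightarrow> nat \<Rightarrow> 'a list" where
  "alt_word x y k = map (\<lambda>i. if even i then x else y) [0..<k]"

text \<open>Artin--Tits group of dihedral type I2(m): generators s = R1, t = R2,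
  relation sts... = tst... (m letters on each side).\<close>
definition artin_I2 :: "nat \<Rightarrow> (gen2 \<times> bool) list set monoid" where
  "artin_I2 m = pres_group {(alt_word R1 R2 m, alt_word R2 R1 m)}"

end

theory Submission
  imports Defs
begin


abbreviation cls :: "('a list \<times> 'a list) set \<Rightarrow> 'a list \<Rightarrow> 'a list set" where
  "cls R w \<equiv> pres_cong R `` {w}"

lemma pc_refl_on: "refl (pres_cong R)"
  by (auto simp: refl_on_def intro: pres_cong.refl)

lemma pc_equiv: "equiv UNIV (pres_cong R)"
  unfolding equiv_def
  by (auto simp: refl_on_def sym_def trans_def intro: pres_cong.refl pres_cong.sym pres_cong.trans)

lemma cls_eq_iff: "cls R u = cls R v \<longleftrightarrow> (u, v) \<in> pres_cong R"
  using eq_equiv_class_iff[OF pc_equiv] by simp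

lemma pc_append: "(u, u') \<in> pres_cong R \<Longrightarrow> (v, v') \<in> pres_cong R \<Longrightarrow> (u @ v, u' @ v') \<in> pres_cong R"
proof -
  assume 1: "(u, u') \<in> pres_cong R" and 2: "(v, v') \<in> pres_cong R"
  have "(u @ v, u' @ v) \<in> pres_cong R" using pres_cong.ctx[OF 1, of "[]" v] by simp
  moreover have "(u' @ v, u' @ v') \<in> pres_cong R" using pres_cong.ctx[OF 2, of u' "[]"] by simp
  ultimately show ?thesis by (rule pres_cong.trans)
qed

lemma carrier_pres: "carrier (pres_monoid R) = range (cls R)"
  by (auto simp: pres_monoid_def quotient_def)

lemma one_pres: "one (pres_monoid R) = cls R []"
  by (simp add: pres_monoid_def)

lemma mult_cls: "cls R u \<otimes>\<^bsub>pres_monoid R\<^esub> cls R v = cls R (u @ v)"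
proof -
  let ?S = "{u' @ v' |u' v'. u' \<in> cls R u \<and> v' \<in> cls R v}"
  have S: "\<And>z. z \<in> ?S \<Longrightarrow> (u @ v, z) \<in> pres_cong R"
  proof -
    fix z assume "z \<in> ?S"
    then obtain u' v' where z: "z = u' @ v'" "(u, u') \<in> pres_cong R" "(v, v') \<in> pres_cong R" by auto
    then show "(u @ v, z) \<in> pres_cong R" using pc_append by blast
  qed
  have uv: "u @ v \<in> ?S" by (auto intro: pres_cong.refl)
  have "pres_cong R `` ?S = cls R (u @ v)"
  proof
    show "pres_cong R `` ?S \<subseteq> cls R (u @ v)"
    proof
      fix y assume "y \<in> pres_cong R `` ?S"
      then obtain z where "z \<in> ?S" "(z, y) \<in> pres_cong R" by auto
      then show "y \<in> cls R (u @ v)" using S pres_cong.trans by blast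
    qed
  next
    show "cls R (u @ v) \<subseteq> pres_cong R `` ?S" using uv by auto
  qed
  then show ?thesis by (simp add: pres_monoid_def)
qed

lemma monoid_pres: "monoid (pres_monoid R)"
proof (rule monoidI)
  fix x y assume "x \<in> carrier (pres_monoid R)" "y \<in> carrier (pres_monoid R)"
  then show "x \<otimes>\<^bsub>pres_monoid R\<^esub> y \<in> carrier (pres_monoid R)"
    by (auto simp: carrier_pres mult_cls)
next
  show "\<one>\<^bsub>pres_monoid R\<^esub> \<in> carrier (pres_monoid R)" by (simp add: carrier_pres one_pres)
next
  fix x y z assume "x \<in> carrier (pres_monoid R)" "y \<in> carrier (pres_monoid R)" "z \<in> carrier (pres_monoid R)"
  then show "x \<otimes>\<^bsub>pres_monoid R\<^esub> y \<otimes>\<^bsub>pres_monoid R\<^esub> z = x \<otimes>\<^bsub>pres_monoid R\<^esub> (y \<otimes>\<^bsub>pres_monoid R\<^esub> z)"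
    by (auto simp: carrier_pres mult_cls)
next
  fix x assume "x \<in> carrier (pres_monoid R)"
  then show "\<one>\<^bsub>pres_monoid R\<^esub> \<otimes>\<^bsub>pres_monoid R\<^esub> x = x" "x \<otimes>\<^bsub>pres_monoid R\<^esub> \<one>\<^bsub>pres_monoid R\<^esub> = x"
    by (auto simp: carrier_pres mult_cls one_pres)
qed

lemma cls_foldr: "foldr (\<lambda>a b. a \<otimes>\<^bsub>pres_monoid R\<^esub> b) (map (\<lambda>s. cls R [s]) w) \<one>\<^bsub>pres_monoid R\<^esub> = cls R w"
  by (induction w) (auto simp: one_pres mult_cls)

definition flipl :: "('a \<times> bool) list \<Rightarrow> ('a \<times> bool) list" where
  "flipl w = rev (map (\<lambda>(x, e). (x, \<not> e)) w)"

lemma flipl_flipl[simp]: "flipl (flipl w) = w"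
  by (simp add: flipl_def rev_map comp_def case_prod_beta)

lemma gr_cancel: "([(a, e), (a, \<not> e)], []) \<in> pres_cong (group_rels R)"
  by (rule pres_cong.base) (auto simp: group_rels_def)

lemma gr_rinv: "(w @ flipl w, []) \<in> pres_cong (group_rels R)"
proof (induction w)
  case Nil then show ?case by (simp add: flipl_def pres_cong.refl)
next
  case (Cons l w)
  obtain a e where l: "l = (a, e)" by (cases l)
  have "(l # w @ flipl w @ [(a, \<not> e)], l # [] @ [(a, \<not> e)]) \<in> pres_cong (group_rels R)"
    using pres_cong.ctx[OF Cons, of "[l]" "[(a, \<not> e)]"] by simp
  moreover have "(l # [] @ [(a, \<not> e)], []) \<in> pres_cong (group_rels R)" using gr_cancel l by simp
  ultimately show ?case using l by (auto simp: flipl_def intro: pres_cong.trans)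
qed

lemma gr_linv: "(flipl w @ w, []) \<in> pres_cong (group_rels R)"
  using gr_rinv[of "flipl w"] by simp

lemma group_pres: "group (pres_group R)"
proof -
  interpret monoid "pres_group R" unfolding pres_group_def by (rule monoid_pres)
  show ?thesis
  proof (rule group_l_invI)
    fix x assume "x \<in> carrier (pres_group R)"
    then obtain w where x: "x = cls (group_rels R) w" by (auto simp: pres_group_def carrier_pres)
    show "\<exists>y\<in>carrier (pres_group R). y \<otimes>\<^bsub>pres_group R\<^esub> x = \<one>\<^bsub>pres_group R\<^esub>"
      apply (rule bexI[of _ "cls (group_rels R) (flipl w)"])
      using gr_linv[of w R] by (auto simp: x pres_group_def mult_cls one_pres carrier_pres cls_eq_iff)
  qed
qed



definition evalH :: "('b, 'c) monoid_scheme \<Rightarrow> ('a \<Rightarrow> 'b) \<Rightarrow> ('a \<times> bool) list \<Rightarrow> 'b" where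
  "evalH H f w = foldr (\<lambda>(x, e) r. (if e then f x else inv\<^bsub>H\<^esub> (f x)) \<otimes>\<^bsub>H\<^esub> r) w \<one>\<^bsub>H\<^esub>"

lemma evalH_Nil[simp]: "evalH H f [] = \<one>\<^bsub>H\<^esub>"
  by (simp add: evalH_def)

lemma evalH_Cons[simp]: "evalH H f ((x, e) # w) = (if e then f x else inv\<^bsub>H\<^esub> (f x)) \<otimes>\<^bsub>H\<^esub> evalH H f w"
  by (simp add: evalH_def)

context group
begin

lemma evalH_closed: "(\<And>x. f x \<in> carrier G) \<Longrightarrow> evalH G f w \<in> carrier G"
  by (induction w) auto

lemma evalH_append: "(\<And>x. f x \<in> carrier G) \<Longrightarrow> evalH G f (u @ v) = evalH G f u \<otimes> evalH G f v"
  by (induction u) (auto simp: evalH_closed m_assoc)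

lemma evalH_cong:
  assumes f: "\<And>x. f x \<in> carrier G"
    and rel: "\<And>u v. (u, v) \<in> R \<Longrightarrow> evalH G f (map (\<lambda>a. (a, True)) u) = evalH G f (map (\<lambda>a. (a, True)) v)"
    and uv: "(u, v) \<in> pres_cong (group_rels R)"
  shows "evalH G f u = evalH G f v"
  using uv
proof (induction rule: pres_cong.induct)
  case (base u v)
  then show ?case
    by (auto simp: group_rels_def f rel)
next
  case (ctx u v x y)
  then show ?case by (simp add: evalH_append f)
qed auto

end

definition hom_of :: "('b, 'c) monoid_scheme \<Rightarrow> ('a \<Rightarrow> 'b) \<Rightarrow> ('a \<times> bool) list set \<Rightarrow> 'b" where
  "hom_of H f A = evalH H f (SOME w. w \<in> A)"

lemma hom_of_cls:
  assumes "group H" "\<And>x. f x \<in> carrier H"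
    and rel: "\<And>u v. (u, v) \<in> R \<Longrightarrow> evalH H f (map (\<lambda>a. (a, True)) u) = evalH H f (map (\<lambda>a. (a, True)) v)"
  shows "hom_of H f (cls (group_rels R) w) = evalH H f w"
proof -
  have "w \<in> cls (group_rels R) w" by (simp add: pres_cong.refl)
  then have "(SOME w'. w' \<in> cls (group_rels R) w) \<in> cls (group_rels R) w" by (rule someI)
  then have "(w, SOME w'. w' \<in> cls (group_rels R) w) \<in> pres_cong (group_rels R)" by simp
  then show ?thesis unfolding hom_of_def
    using group.evalH_cong[OF assms(1), of f R, OF assms(2) rel] by (metis pres_cong.sym)
qed

lemma hom_of_hom:
  assumes "group H" "\<And>x. f x \<in> carrier H"
    and rel: "\<And>u v. (u, v) \<in> R \<Longrightarrow> evalH H f (map (\<lambda>a. (a, True)) u) = evalH H f (map (\<lambda>a. (a, True)) v)"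
  shows "hom_of H f \<in> hom (pres_group R) H"
proof (rule homI)
  fix x assume "x \<in> carrier (pres_group R)"
  then obtain w where "x = cls (group_rels R) w" by (auto simp: pres_group_def carrier_pres)
  then show "hom_of H f x \<in> carrier H"
    using hom_of_cls[OF assms] group.evalH_closed[OF assms(1,2)] by simp
next
  fix x y assume "x \<in> carrier (pres_group R)" "y \<in> carrier (pres_group R)"
  then obtain u v where "x = cls (group_rels R) u" "y = cls (group_rels R) v" by (auto simp: pres_group_def carrier_pres)
  then show "hom_of H f (x \<otimes>\<^bsub>pres_group R\<^esub> y) = hom_of H f x \<otimes>\<^bsub>H\<^esub> hom_of H f y"
    using hom_of_cls[OF assms] group.evalH_append[OF assms(1,2)]
    by (simp add: pres_group_def mult_cls)
qed

lemma pres_group_inv_gen: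
  "inv\<^bsub>pres_group R\<^esub> (cls (group_rels R) [(x, True)]) = cls (group_rels R) [(x, False)]"
proof -
  interpret group "pres_group R" by (rule group_pres)
  have c: "cls (group_rels R) w \<in> carrier (pres_group R)" for w by (simp add: pres_group_def carrier_pres)
  have "cls (group_rels R) [(x, False)] \<otimes>\<^bsub>pres_group R\<^esub> cls (group_rels R) [(x, True)] = \<one>\<^bsub>pres_group R\<^esub>"
    using gr_cancel[of x False R] by (simp add: pres_group_def mult_cls one_pres cls_eq_iff)
  then show ?thesis using inv_equality c by metis
qed

lemma evalH_canonical:
  "evalH (pres_group R) (\<lambda>x. cls (group_rels R) [(x, True)]) w = cls (group_rels R) w"
proof (induction w)
  case Nil then show ?case by (simp add: pres_group_def one_pres)
next
  case (Cons l w)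
  obtain x e where l: "l = (x, e)" by (cases l)
  then show ?case using Cons pres_group_inv_gen[of R x]
    by (simp add: pres_group_def mult_cls)
qed



locale oddm =
  fixes m k :: nat
  assumes mk: "m = 2 * k + 1" and k1: "k \<ge> 1"
begin

abbreviation C where "C \<equiv> pres_cong (rel_M m)"

lemma rel_eq: "rel_M m = {(R1 # replicate k R2 @ [R1], replicate (Suc k) R2)}"
  using mk by (simp add: rel_M_def)

lemma rel_step: "(R1 # replicate k R2 @ [R1], replicate (Suc k) R2) \<in> C"
  by (rule pres_cong.base) (simp add: rel_eq)

lemma m_pos: "m > 0" using mk by simp

definition bs :: "int \<Rightarrow> int \<times> nat list \<Rightarrow> int \<times> nat list" where
  "bs j p = (case p of (n, []) \<Rightarrow> (n + j, [])
      | (n, r # rs) \<Rightarrow> (n + int m * ((int r + j) div int m), nat ((int r + j) mod int m) # rs))"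

lemma bs_Nil[simp]: "bs j (n, []) = (n + j, [])" by (simp add: bs_def)
lemma bs_Cons: "bs j (n, r # rs) = (n + int m * ((int r + j) div int m), nat ((int r + j) mod int m) # rs)"
  by (simp add: bs_def)

definition hdok :: "int \<times> nat list \<Rightarrow> bool" where
  "hdok p = (case snd p of [] \<Rightarrow> True | r # _ \<Rightarrow> r < m)"

lemma bs_add: "hdok p \<Longrightarrow> bs i (bs j p) = bs (i + j) p"
proof -
  assume h: "hdok p"
  obtain n rs where p: "p = (n, rs)" by (cases p)
  show ?thesis
  proof (cases rs)
    case Nil then show ?thesis using p by (simp add: algebra_simps)
  next
    case (Cons r rs')
    have mp: "int m > 0" using m_pos by simp
    let ?t = "int r + j"
    have nn: "?t mod int m \<ge> 0" using mp by simp
    have e1: "int (nat (?t mod int m)) = ?t mod int m" using nn by simp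
    have e2: "(?t + i) div int m = ?t div int m + (?t mod int m + i) div int m"
    proof -
      have "?t + i = (?t mod int m + i) + (?t div int m) * int m" by simp
      then have "(?t + i) div int m = ((?t mod int m + i) + (?t div int m) * int m) div int m" by simp
      also have "\<dots> = ?t div int m + (?t mod int m + i) div int m"
        by (rule div_mult_self1) (use mp in simp)
      finally show ?thesis .
    qed
    have e3: "(?t mod int m + i) mod int m = (?t + i) mod int m" by (simp add: mod_add_left_eq)
    show ?thesis using p Cons e1 e2 e3
      by (simp add: bs_Cons algebra_simps)
  qed
qed

lemma bs_0: "hdok p \<Longrightarrow> bs 0 p = p"
proof -
  assume h: "hdok p"
  obtain n rs where p: "p = (n, rs)" by (cases p)
  show ?thesis
  proof (cases rs)
    case Nil then show ?thesis using p by simp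
  next
    case (Cons r rs')
    then have "r < m" using h p by (simp add: hdok_def)
    then show ?thesis using p Cons by (simp add: bs_Cons)
  qed
qed

lemma hdok_bs: "hdok (bs j p)"
  using m_pos by (cases p; cases "snd p") (auto simp: hdok_def bs_Cons nat_less_iff)

definition valid :: "int \<times> nat list \<Rightarrow> bool" where
  "valid p = (case snd p of [] \<Rightarrow> True | r # rest \<Rightarrow> r < m \<and> (\<forall>x\<in>set rest. x < m \<and> x \<noteq> k))"

lemma valid_hdok: "valid p \<Longrightarrow> hdok p"
  by (auto simp: valid_def hdok_def split: list.splits)

lemma valid_bs: "valid p \<Longrightarrow> valid (bs j p)"
  using m_pos by (cases p; cases "snd p") (auto simp: valid_def bs_Cons nat_less_iff)

lemma bs_inv1: "hdok p \<Longrightarrow> bs j (bs (-j) p) = p"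
  by (simp add: bs_add bs_0)
lemma bs_inv2: "hdok p \<Longrightarrow> bs (-j) (bs j p) = p"
  by (simp add: bs_add bs_0)

fun act :: "gen2 \<Rightarrow> int \<times> nat list \<Rightarrow> int \<times> nat list" where
  "act R2 p = bs 1 p"
| "act R1 (n, []) = (n, [0])"
| "act R1 (n, r # rs) = (if r = k then bs (int k + 1) (n, rs) else (n, 0 # r # rs))"

fun actinv :: "gen2 \<Rightarrow> int \<times> nat list \<Rightarrow> int \<times> nat list" where
  "actinv R2 p = bs (-1) p"
| "actinv R1 (n, rs) = (if rs \<noteq> [] \<and> hd rs = 0 then (n, tl rs)
      else (case bs (- (int k + 1)) (n, rs) of (n', rs') \<Rightarrow> (n', k # rs')))"

lemma valid_act: "valid p \<Longrightarrow> valid (act s p)"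
proof (cases s)
  case R1
  assume v: "valid p"
  obtain n rs where p: "p = (n, rs)" by (cases p)
  show ?thesis
  proof (cases rs)
    case Nil then show ?thesis using p R1 m_pos by (simp add: valid_def)
  next
    case (Cons r rs')
    have "valid (n, rs')" using v p Cons by (auto simp: valid_def split: list.splits)
    then show ?thesis using p Cons R1 v valid_bs m_pos by (auto simp: valid_def)
  qed
qed (auto simp: valid_bs)

lemma valid_actinv: "valid p \<Longrightarrow> valid (actinv s p)"
proof (cases s)
  case R1
  assume v: "valid p"
  obtain n rs where p: "p = (n, rs)" by (cases p)
  show ?thesis
  proof (cases "rs \<noteq> [] \<and> hd rs = 0")
    case True
    then show ?thesis using p R1 v by (auto simp: valid_def neq_Nil_conv split: list.splits)
  next
    case False
    obtain n' rs' where b: "bs (- (int k + 1)) (n, rs) = (n', rs')" by (cases "bs (- (int k + 1)) (n, rs)")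
    have vb: "valid (n', rs')" by (metis b valid_bs v p)
    have "\<forall>x\<in>set rs'. x < m \<and> x \<noteq> k"
    proof (cases rs)
      case Nil then show ?thesis using b by simp
    next
      case (Cons r rr)
      then have r0: "r \<noteq> 0" "r < m" using False v p by (auto simp: valid_def)
      have rr: "\<forall>x\<in>set rr. x < m \<and> x \<noteq> k" using v p Cons by (auto simp: valid_def)
      have mp: "int m > 0" using m_pos by simp
      have "nat ((int r + - (int k + 1)) mod int m) \<noteq> k"
      proof (cases "r \<ge> k + 1")
        case True
        then have "(int r + - (int k + 1)) mod int m = int r + - (int k + 1)"
          using r0 mk by (intro mod_pos_pos_trivial) auto
        then show ?thesis using True r0 mk by simp
      next
        case False
        have "(int r + - (int k + 1)) mod int m = int r + int k"
        proof -
          have "(int r + - (int k + 1)) = (int r + int k) + (-1) * int m" using mk by simp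
          then have "(int r + - (int k + 1)) mod int m = (int r + int k) mod int m" by (metis mod_mult_self1)
          also have "\<dots> = int r + int k" using r0 mk False by (intro mod_pos_pos_trivial) auto
          finally show ?thesis .
        qed
        then show ?thesis using r0 by simp
      qed
      then show ?thesis using b Cons rr m_pos by (auto simp: bs_Cons nat_less_iff)
    qed
    moreover have "actinv s p = (n', k # rs')" using False p R1 b by auto
    moreover have "k < m" using mk by simp
    ultimately show ?thesis by (simp add: valid_def)
  qed
qed (auto simp: valid_bs)

lemma act_actinv: "valid p \<Longrightarrow> act s (actinv s p) = p"
proof (cases s)
  case R2
  assume v: "valid p"
  then show ?thesis using R2 bs_inv1[OF valid_hdok[OF v], of 1] by simp
next
  case R1
  assume v: "valid p"
  obtain n rs where p: "p = (n, rs)" by (cases p)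
  show ?thesis
  proof (cases "rs \<noteq> [] \<and> hd rs = 0")
    case True
    then obtain rr where rs: "rs = 0 # rr" by (cases rs) auto
    show ?thesis
    proof (cases rr)
      case Nil then show ?thesis using p R1 rs by simp
    next
      case (Cons s rr')
      then have "s \<noteq> k" using v p rs by (auto simp: valid_def)
      then show ?thesis using p R1 rs Cons by simp
    qed
  next
    case False
    obtain n' rs' where b: "bs (- (int k + 1)) (n, rs) = (n', rs')" by (cases "bs (- (int k + 1)) (n, rs)")
    have "actinv s p = (n', k # rs')" using False p R1 b by auto
    moreover have "bs (int k + 1) (n', rs') = p"
      using bs_inv1[OF valid_hdok[OF v], of "int k + 1"] b p by simp
    ultimately show ?thesis using R1 by simp
  qed
qed

lemma actinv_act: "valid p \<Longrightarrow> actinv s (act s p) = p"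
proof (cases s)
  case R2
  assume v: "valid p"
  then show ?thesis using R2 bs_inv2[OF valid_hdok[OF v], of 1] by simp
next
  case R1
  assume v: "valid p"
  obtain n rs where p: "p = (n, rs)" by (cases p)
  show ?thesis
  proof (cases rs)
    case Nil then show ?thesis using p R1 by simp
  next
    case (Cons r rr)
    show ?thesis
    proof (cases "r = k")
      case False then show ?thesis using p R1 Cons by simp
    next
      case True
      have vr: "valid (n, rr)" using v p Cons by (auto simp: valid_def split: list.splits)
      obtain n' rs' where b: "bs (int k + 1) (n, rr) = (n', rs')" by (cases "bs (int k + 1) (n, rr)")
      have a: "act s p = (n', rs')" using p R1 Cons True b by simp
      have nz: "\<not> (rs' \<noteq> [] \<and> hd rs' = 0)"
      proof (cases rr)
        case Nil then show ?thesis using b by simp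
      next
        case (Cons s rr')
        then have s: "s < m" "s \<noteq> k" using v p \<open>rs = r # rr\<close> by (auto simp: valid_def)
        have mp: "int m > 0" using m_pos by simp
        have "(int s + (int k + 1)) mod int m \<noteq> 0"
        proof (cases "s + k + 1 < m")
          case True
          then have "(int s + (int k + 1)) mod int m = int s + (int k + 1)"
            by (intro mod_pos_pos_trivial) auto
          then show ?thesis by simp
        next
          case False
          have "(int s + (int k + 1)) = (int s + int k + 1 - int m) + 1 * int m" by simp
          then have "(int s + (int k + 1)) mod int m = (int s + int k + 1 - int m) mod int m"
            by (metis mod_mult_self1)
          also have "\<dots> = int s + int k + 1 - int m"
            using False s mk by (intro mod_pos_pos_trivial) auto
          finally show ?thesis using s mk by simp
        qed
        moreover have "(int s + (int k + 1)) mod int m \<ge> 0" using mp by simp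
        ultimately show ?thesis using b Cons by (auto simp: bs_Cons)
      qed
      have "actinv s (act s p) = actinv R1 (n', rs')" using a R1 by simp
      also have "\<dots> = (case bs (- (int k + 1)) (n', rs') of (n'', rs'') \<Rightarrow> (n'', k # rs''))"
        by (simp only: actinv.simps if_not_P[OF nz])
      also have "bs (- (int k + 1)) (n', rs') = (n, rr)"
        using bs_inv2[OF valid_hdok[OF vr], of "int k + 1"] b by simp
      finally show ?thesis using p Cons True by simp
    qed
  qed
qed

end



context oddm
begin

definition run :: "gen2 list \<Rightarrow> int \<times> nat list \<Rightarrow> int \<times> nat list" where
  "run w p = fold act w p"

lemma run_Nil[simp]: "run [] p = p" by (simp add: run_def)
lemma run_Cons[simp]: "run (s # w) p = run w (act s p)" by (simp add: run_def)
lemma run_append[simp]: "run (u @ v) p = run v (run u p)" by (simp add: run_def)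

lemma valid_run: "valid p \<Longrightarrow> valid (run w p)"
  by (induction w arbitrary: p) (auto simp: valid_act)

lemma run_rep: "hdok p \<Longrightarrow> run (replicate j R2) p = bs (int j) p"
proof (induction j arbitrary: p)
  case 0 then show ?case by (simp add: bs_0)
next
  case (Suc j)
  have "run (replicate (Suc j) R2) p = run (replicate j R2) (bs 1 p)" by simp
  also have "\<dots> = bs (int j) (bs 1 p)" using Suc.IH[OF hdok_bs] .
  also have "\<dots> = bs (int j + 1) p" by (rule bs_add[OF Suc.prems])
  also have "\<dots> = bs (int (Suc j)) p" by (simp add: add.commute)
  finally show ?case .
qed

lemma int_m: "int m = 2 * int k + 1" using mk by simp

lemma rel_act: "valid p \<Longrightarrow> run (R1 # replicate k R2 @ [R1]) p = run (replicate (Suc k) R2) p"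
proof -
  assume v: "valid p"
  obtain n rs where p: "p = (n, rs)" by (cases p)
  have km: "k < m" using mk by simp
  have rhs: "run (replicate (Suc k) R2) p = bs (int k + 1) p"
    using run_rep[OF valid_hdok[OF v], of "Suc k"] by (simp add: add.commute)
  have "hdok (act R1 p)" using valid_act[OF v] valid_hdok by blast
  then have lhs: "run (R1 # replicate k R2 @ [R1]) p = act R1 (bs (int k) (act R1 p))"
    using run_rep[of "act R1 p" k] by simp
  show ?thesis
  proof (cases rs)
    case Nil
    have "bs (int k) (n, [0]) = (n, [k])" using km by (simp add: bs_Cons)
    then show ?thesis using lhs rhs p Nil by simp
  next
    case (Cons r rr)
    show ?thesis
    proof (cases "r = k")
      case False
      have "bs (int k) (n, 0 # r # rr) = (n, k # r # rr)" using km by (simp add: bs_Cons)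
      then show ?thesis using lhs rhs p Cons False by simp
    next
      case True
      show ?thesis
      proof (cases rr)
        case Nil
        have "bs (int k + 1) (n, [k]) = (n + int k + 1 + int k, [0])"
          by (simp add: bs_Cons int_m)
        then show ?thesis using lhs rhs p Cons True Nil by (simp add: algebra_simps)
      next
        case (Cons s rr')
        have s: "s < m" "s \<noteq> k" using v p \<open>rs = r # rr\<close> Cons by (auto simp: valid_def)
        have h: "hdok (n, s # rr')" using s by (simp add: hdok_def)
        have "bs (int k) (bs (int k + 1) (n, s # rr')) = bs (int m) (n, s # rr')"
          using bs_add[OF h] by (simp add: int_m algebra_simps)
        also have "\<dots> = (n + int m, s # rr')"
        proof -
          have "(int s + int m) div int m = 1" using s m_pos by (simp add: div_add_self2 div_pos_pos_trivial)
          moreover have "(int s + int m) mod int m = int s" using s m_pos by (simp add: mod_add_self2 mod_pos_pos_trivial)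
          ultimately show ?thesis by (simp add: bs_Cons)
        qed
        finally have e1: "bs (int k) (bs (int k + 1) (n, s # rr')) = (n + int m, s # rr')" .
        have e2: "bs (int k + 1) (n, k # s # rr') = (n + int m, 0 # s # rr')"
          by (simp add: bs_Cons int_m)
        show ?thesis using lhs rhs p \<open>rs = r # rr\<close> True Cons e1 e2 s by simp
      qed
    qed
  qed
qed

lemma run_cong: "(u, v) \<in> C \<Longrightarrow> valid p \<Longrightarrow> run u p = run v p"
proof (induction arbitrary: p rule: pres_cong.induct)
  case (base u v)
  then show ?case using rel_act by (simp add: rel_eq)
next
  case (ctx u v x y)
  then show ?case using valid_run by simp
qed auto

subsection \<open>Group action\<close>

definition actG :: "gen2 \<times> bool \<Rightarrow> int \<times> nat list \<Rightarrow> int \<times> nat list" where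
  "actG l = (if snd l then act (fst l) else actinv (fst l))"

definition runG :: "(gen2 \<times> bool) list \<Rightarrow> int \<times> nat list \<Rightarrow> int \<times> nat list" where
  "runG w p = fold actG w p"

lemma runG_Cons[simp]: "runG (l # w) p = runG w (actG l p)" by (simp add: runG_def)
lemma runG_Nil[simp]: "runG [] p = p" by (simp add: runG_def)
lemma runG_append[simp]: "runG (u @ v) p = runG v (runG u p)" by (simp add: runG_def)

lemma valid_actG: "valid p \<Longrightarrow> valid (actG l p)"
  by (simp add: actG_def valid_act valid_actinv)

lemma valid_runG: "valid p \<Longrightarrow> valid (runG w p)"
  by (induction w arbitrary: p) (auto simp: valid_actG)

lemma runG_map: "runG (map (\<lambda>a. (a, True)) w) p = run w p"
  by (induction w arbitrary: p) (auto simp: actG_def)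

lemma runG_cong: "(u, v) \<in> pres_cong (group_rels (rel_M m)) \<Longrightarrow> valid p \<Longrightarrow> runG u p = runG v p"
proof (induction arbitrary: p rule: pres_cong.induct)
  case (base u v)
  then consider (r) u' v' where "u = map (\<lambda>a. (a, True)) u'" "v = map (\<lambda>a. (a, True)) v'" "(u', v') \<in> rel_M m"
    | (c) a e where "u = [(a, e), (a, \<not> e)]" "v = []"
    by (auto simp: group_rels_def)
  then show ?case
  proof cases
    case r
    then show ?thesis using run_cong[OF pres_cong.base[OF r(3)] base(2)] by (simp add: runG_map)
  next
    case c
    then show ?thesis using base(2) by (cases e) (auto simp: actG_def act_actinv actinv_act)
  qed
next
  case (ctx u v x y)
  then show ?case using valid_runG by simp
qed auto

subsection \<open>Normal form words\<close>

definition wd :: "nat \<Rightarrow> gen2 list" where "wd r = R1 # replicate r R2"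

definition word_of :: "int \<times> nat list \<Rightarrow> gen2 list" where
  "word_of p = replicate (nat (fst p)) R2 @ concat (map wd (rev (snd p)))"

abbreviation D where "D \<equiv> replicate m R2"

lemma rep_split: "replicate m R2 = replicate k R2 @ replicate (Suc k) R2"
proof -
  have "m = k + Suc k" using mk by simp
  then show ?thesis by (simp only: replicate_add)
qed

lemma rep_split2: "replicate m R2 = replicate (Suc k) R2 @ replicate k R2"
proof -
  have "m = Suc k + k" using mk by simp
  then show ?thesis by (simp only: replicate_add)
qed

lemma a_comm: "([R1] @ D, D @ [R1]) \<in> C"
proof -
  have 1: "([R1] @ D, (R1 # replicate k R2) @ (R1 # replicate k R2 @ [R1])) \<in> C"
    using pres_cong.ctx[OF pres_cong.sym[OF rel_step], of "R1 # replicate k R2" "[]"]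
    by (simp add: rep_split)
  have 2: "((R1 # replicate k R2 @ [R1]) @ (replicate k R2 @ [R1]), replicate (Suc k) R2 @ (replicate k R2 @ [R1])) \<in> C"
    using pres_cong.ctx[OF rel_step, of "[]" "replicate k R2 @ [R1]"] by simp
  have "(R1 # replicate k R2) @ (R1 # replicate k R2 @ [R1]) = (R1 # replicate k R2 @ [R1]) @ (replicate k R2 @ [R1])"
    by simp
  moreover have "replicate (Suc k) R2 @ (replicate k R2 @ [R1]) = D @ [R1]"
    by (simp add: rep_split2)
  ultimately show ?thesis using 1 2 pres_cong.trans by metis
qed

lemma D_comm: "(w @ D, D @ w) \<in> C"
proof (induction w)
  case Nil then show ?case by (simp add: pres_cong.refl)
next
  case (Cons s w)
  have 1: "([s] @ (w @ D) @ [], [s] @ (D @ w) @ []) \<in> C" by (rule pres_cong.ctx[OF Cons])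
  have 2: "([] @ ([s] @ D) @ w, [] @ (D @ [s]) @ w) \<in> C"
  proof (cases s)
    case R1 then show ?thesis using pres_cong.ctx[OF a_comm, of "[]" w] by simp
  next
    case R2 then show ?thesis by (simp add: pres_cong.refl replicate_append_same)
  qed
  show ?case using 1 2 pres_cong.trans by fastforce
qed

lemma fst_bs_nonneg: "fst p \<ge> 0 \<Longrightarrow> j \<ge> 0 \<Longrightarrow> fst (bs j p) \<ge> 0"
proof -
  assume a: "fst p \<ge> 0" "j \<ge> 0"
  have "\<And>r::nat. (int r + j) div int m \<ge> 0" using a m_pos by (simp add: pos_imp_zdiv_nonneg_iff)
  then show ?thesis using a by (cases p; cases "snd p") (auto simp: bs_Cons)
qed

lemma fst_act_nonneg: "valid p \<Longrightarrow> fst p \<ge> 0 \<Longrightarrow> fst (act s p) \<ge> 0"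
  by (cases s; cases p; cases "snd p") (auto simp: fst_bs_nonneg)

lemma fst_run_nonneg: "valid p \<Longrightarrow> fst p \<ge> 0 \<Longrightarrow> fst (run w p) \<ge> 0"
  by (induction w arbitrary: p) (auto simp: fst_act_nonneg valid_act)

lemma word_bs1: "valid p \<Longrightarrow> fst p \<ge> 0 \<Longrightarrow> (word_of (bs 1 p), word_of p @ [R2]) \<in> C"
proof -
  assume v: "valid p" and n: "fst p \<ge> 0"
  obtain n rs where p: "p = (n, rs)" by (cases p)
  show ?thesis
  proof (cases rs)
    case Nil
    have "nat (n + 1) = Suc (nat n)" using n p by simp
    then show ?thesis using p Nil by (simp add: word_of_def pres_cong.refl replicate_append_same)
  next
    case (Cons r rr)
    have r: "r < m" using v p Cons by (simp add: valid_def)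
    show ?thesis
    proof (cases "Suc r < m")
      case True
      then have "bs 1 p = (n, Suc r # rr)" using p Cons by (simp add: bs_Cons)
      then show ?thesis using p Cons by (simp add: word_of_def wd_def pres_cong.refl replicate_append_same)
    next
      case False
      then have rm: "Suc r = m" using r by simp
      then have "int r + 1 = int m" by simp
      then have "bs 1 p = (n + int m, 0 # rr)" using p Cons m_pos by (simp add: bs_Cons)
      then have l: "word_of (bs 1 p) = replicate (nat n) R2 @ D @ concat (map wd (rev rr)) @ [R1]"
        using n p by (simp add: word_of_def wd_def nat_add_distrib replicate_add)
      have rr: "word_of p @ [R2] = replicate (nat n) R2 @ (concat (map wd (rev rr)) @ [R1]) @ D"
        using p Cons rm[symmetric] by (simp add: word_of_def wd_def replicate_append_same)
      show ?thesis unfolding l rr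
        using pres_cong.ctx[OF D_comm[of "concat (map wd (rev rr)) @ [R1]"], of "replicate (nat n) R2" "[]"]
        by (simp add: pres_cong.sym)
    qed
  qed
qed

lemma valid_bs_nn: "valid p \<Longrightarrow> fst p \<ge> 0 \<Longrightarrow> valid (bs (int j) p) \<and> fst (bs (int j) p) \<ge> 0"
  using valid_bs fst_bs_nonneg by simp

lemma word_bs: "valid p \<Longrightarrow> fst p \<ge> 0 \<Longrightarrow> (word_of (bs (int j) p), word_of p @ replicate j R2) \<in> C"
proof (induction j)
  case 0 then show ?case by (simp add: bs_0 valid_hdok pres_cong.refl)
next
  case (Suc j)
  have e: "bs (int (Suc j)) p = bs 1 (bs (int j) p)" using bs_add[OF valid_hdok[OF Suc.prems(1)]] by (simp add: add.commute)
  have 1: "(word_of (bs 1 (bs (int j) p)), word_of (bs (int j) p) @ [R2]) \<in> C"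
    using word_bs1 valid_bs_nn[OF Suc.prems] by blast
  have 2: "(word_of (bs (int j) p) @ [R2], (word_of p @ replicate j R2) @ [R2]) \<in> C"
    using pres_cong.ctx[OF Suc.IH[OF Suc.prems], of "[]" "[R2]"] by simp
  have e2: "word_of p @ replicate (Suc j) R2 = (word_of p @ replicate j R2) @ [R2]"
    by (simp add: replicate_append_same)
  show ?case unfolding e e2 using 1 2 by (rule pres_cong.trans)
qed

lemma word_act: "valid p \<Longrightarrow> fst p \<ge> 0 \<Longrightarrow> (word_of (act s p), word_of p @ [s]) \<in> C"
proof (cases s)
  case R2
  assume "valid p" "fst p \<ge> 0"
  then show ?thesis using R2 word_bs1 by simp
next
  case R1
  assume v: "valid p" and n: "fst p \<ge> 0"
  obtain n rs where p: "p = (n, rs)" by (cases p)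
  show ?thesis
  proof (cases rs)
    case Nil then show ?thesis using p R1 by (simp add: word_of_def wd_def pres_cong.refl)
  next
    case (Cons r rr)
    show ?thesis
    proof (cases "r = k")
      case False then show ?thesis using p R1 Cons by (simp add: word_of_def wd_def pres_cong.refl)
    next
      case True
      have vr: "valid (n, rr)" using v p Cons by (auto simp: valid_def split: list.splits)
      have n0: "fst (n, rr) \<ge> 0" using n p by simp
      have 1: "(word_of (bs (int (Suc k)) (n, rr)), word_of (n, rr) @ replicate (Suc k) R2) \<in> C"
        by (rule word_bs[OF vr n0])
      have 2: "(word_of (n, rr) @ (R1 # replicate k R2 @ [R1]), word_of (n, rr) @ replicate (Suc k) R2) \<in> C"
        using pres_cong.ctx[OF rel_step, of "word_of (n, rr)" "[]"] by simp
      have e: "word_of p @ [s] = word_of (n, rr) @ (R1 # replicate k R2 @ [R1])"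
        using p Cons True R1 by (simp add: word_of_def wd_def)
      have a: "act s p = bs (int (Suc k)) (n, rr)" using p Cons True R1 by (simp add: add.commute)
      show ?thesis unfolding a e by (rule pres_cong.trans[OF 1 pres_cong.sym[OF 2]])
    qed
  qed
qed

definition base :: "int \<times> nat list" where "base = (0, [])"

definition nf :: "gen2 list \<Rightarrow> int \<times> nat list" where "nf w = run w base"

lemma valid_base: "valid base" by (simp add: base_def valid_def)

lemma nf_valid: "valid (nf w)" by (simp add: nf_def valid_run valid_base)
lemma nf_nonneg: "fst (nf w) \<ge> 0" unfolding nf_def by (rule fst_run_nonneg[OF valid_base]) (simp add: base_def)

lemma word_nf: "(word_of (nf w), w) \<in> C"
proof (induction w rule: rev_induct)
  case Nil then show ?case by (simp add: nf_def base_def word_of_def pres_cong.refl)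
next
  case (snoc s w)
  have e: "nf (w @ [s]) = act s (nf w)" by (simp add: nf_def)
  have 1: "(word_of (act s (nf w)), word_of (nf w) @ [s]) \<in> C" using word_act nf_valid nf_nonneg by blast
  have 2: "(word_of (nf w) @ [s], w @ [s]) \<in> C" using pres_cong.ctx[OF snoc, of "[]" "[s]"] by simp
  show ?case using e 1 2 pres_cong.trans by metis
qed

lemma nf_cong: "(u, v) \<in> C \<Longrightarrow> nf u = nf v"
  by (simp add: nf_def run_cong valid_base)

lemma cong_iff_nf: "(u, v) \<in> C \<longleftrightarrow> nf u = nf v"
  using nf_cong word_nf by (metis pres_cong.sym pres_cong.trans)

lemma run_wds: "valid (n, rs) \<Longrightarrow> run (concat (map wd (rev rs))) (n, []) = (n, rs)"
proof (induction rs)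
  case Nil then show ?case by simp
next
  case (Cons r rs)
  have vr: "valid (n, rs)" using Cons.prems by (auto simp: valid_def split: list.splits)
  have r: "r < m" using Cons.prems by (simp add: valid_def)
  have a: "act R1 (n, rs) = (n, 0 # rs)"
  proof (cases rs)
    case (Cons s rs')
    then have "s \<noteq> k" using Cons.prems by (simp add: valid_def)
    then show ?thesis using Cons by simp
  qed simp
  have "run (concat (map wd (rev (r # rs)))) (n, []) = run (wd r) (n, rs)"
    using Cons.IH[OF vr] by simp
  also have "\<dots> = run (replicate r R2) (n, 0 # rs)" using a by (simp add: wd_def)
  also have "\<dots> = bs (int r) (n, 0 # rs)" by (rule run_rep) (simp add: hdok_def m_pos)
  also have "\<dots> = (n, r # rs)" using r by (simp add: bs_Cons)
  finally show ?case .
qed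

lemma nf_word: "valid p \<Longrightarrow> fst p \<ge> 0 \<Longrightarrow> nf (word_of p) = p"
proof -
  assume v: "valid p" and n: "fst p \<ge> 0"
  obtain n rs where p: "p = (n, rs)" by (cases p)
  have "nf (word_of p) = run (concat (map wd (rev rs))) (run (replicate (nat n) R2) base)"
    using p by (simp add: nf_def word_of_def)
  also have "run (replicate (nat n) R2) base = (n, [])"
    using n p by (simp add: run_rep base_def hdok_def)
  finally show ?thesis using run_wds v p by simp
qed

end



context oddm
begin

lemma rcancel1: "(u @ [s], v @ [s]) \<in> C \<Longrightarrow> (u, v) \<in> C"
proof -
  assume "(u @ [s], v @ [s]) \<in> C"
  then have "nf (u @ [s]) = nf (v @ [s])" by (rule nf_cong)
  then have "act s (nf u) = act s (nf v)" by (simp add: nf_def)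
  then have "actinv s (act s (nf u)) = actinv s (act s (nf v))" by simp
  then have "nf u = nf v" using actinv_act nf_valid by simp
  then show ?thesis by (simp add: cong_iff_nf)
qed

lemma rcancel: "(u @ x, v @ x) \<in> C \<Longrightarrow> (u, v) \<in> C"
proof (induction x arbitrary: u v rule: rev_induct)
  case Nil then show ?case by simp
next
  case (snoc s x)
  then show ?case using rcancel1[of "u @ x" s "v @ x"] by simp
qed

lemma rev_cong: "(u, v) \<in> C \<Longrightarrow> (rev u, rev v) \<in> C"
proof (induction rule: pres_cong.induct)
  case (base u v)
  then have "(rev u, rev v) = (R1 # replicate k R2 @ [R1], replicate (Suc k) R2)" by (simp add: rel_eq replicate_append_same)
  then show ?case using rel_step by simp
next
  case (ctx u v x y)
  then show ?case using pres_cong.ctx[OF ctx.IH, of "rev y" "rev x"] by simp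
qed (auto intro: pres_cong.intros)

lemma rev_cong_iff: "(rev u, rev v) \<in> C \<longleftrightarrow> (u, v) \<in> C"
  using rev_cong[of "rev u" "rev v"] rev_cong[of u v] by auto

lemma lcancel: "(x @ u, x @ v) \<in> C \<Longrightarrow> (u, v) \<in> C"
proof -
  assume "(x @ u, x @ v) \<in> C"
  then have "(rev u @ rev x, rev v @ rev x) \<in> C" using rev_cong by fastforce
  then have "(rev u, rev v) \<in> C" by (rule rcancel)
  then show ?thesis by (simp add: rev_cong_iff)
qed

definition wt :: "gen2 list \<Rightarrow> nat" where
  "wt w = sum_list (map (\<lambda>s. if s = R1 then 1 else 2) w)"

lemma wt_append[simp]: "wt (u @ v) = wt u + wt v" by (simp add: wt_def)
lemma wt_Nil[simp]: "wt [] = 0" by (simp add: wt_def)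
lemma wt_Cons[simp]: "wt (s # w) = (if s = R1 then 1 else 2) + wt w" by (simp add: wt_def)
lemma wt_rep[simp]: "wt (replicate j R2) = 2 * j" by (induction j) auto
lemma wt_zero: "wt w = 0 \<Longrightarrow> w = []" by (cases w) (auto split: if_splits)
lemma length_le_wt: "length w \<le> wt w" by (induction w) auto

lemma wt_cong: "(u, v) \<in> C \<Longrightarrow> wt u = wt v"
  by (induction rule: pres_cong.induct) (auto simp: rel_eq)

lemma Dj_comm: "(w @ replicate (m * j) R2, replicate (m * j) R2 @ w) \<in> C"
proof (induction j arbitrary: w)
  case 0 then show ?case by (simp add: pres_cong.refl)
next
  case (Suc j)
  have e: "replicate (m * Suc j) R2 = D @ replicate (m * j) R2" by (simp add: replicate_add[symmetric])
  have 1: "(w @ D @ replicate (m * j) R2, D @ w @ replicate (m * j) R2) \<in> C"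
    using pres_cong.ctx[OF D_comm[of w], of "[]" "replicate (m * j) R2"] by simp
  have 2: "(D @ w @ replicate (m * j) R2, D @ replicate (m * j) R2 @ w) \<in> C"
    using pres_cong.ctx[OF Suc.IH[of w], of D "[]"] by simp
  show ?case unfolding e using pres_cong.trans[OF 1 2] by simp
qed

definition tw :: "gen2 \<Rightarrow> gen2 list" where
  "tw s = (if s = R1 then replicate k R2 @ R1 # replicate k R2 else replicate (m - 1) R2)"

lemma tw_D: "(s # tw s, D) \<in> C"
proof (cases s)
  case R1
  have "(R1 # replicate k R2 @ [R1] @ replicate k R2, replicate (Suc k) R2 @ replicate k R2) \<in> C"
    using pres_cong.ctx[OF rel_step, of "[]" "replicate k R2"] by simp
  then show ?thesis using R1 rep_split2 by (simp add: tw_def)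
next
  case R2
  have "R2 # replicate (m - 1) R2 = D" using m_pos by (cases m) auto
  then show ?thesis using R2 by (simp add: tw_def pres_cong.refl)
qed

lemma tw_D': "(tw s @ [s], D) \<in> C"
proof -
  have "rev (tw s) = tw s" by (simp add: tw_def)
  then show ?thesis using rev_cong[OF tw_D[of s]] by simp
qed

lemma common_mult: "\<exists>t. (w @ t, replicate (m * length w) R2) \<in> C"
proof (induction w)
  case Nil then show ?case by (auto intro: pres_cong.refl)
next
  case (Cons s w)
  then obtain t where t: "(w @ t, replicate (m * length w) R2) \<in> C" by blast
  let ?Dj = "replicate (m * length w) R2"
  have 1: "(s # w @ t @ tw s, s # ?Dj @ tw s) \<in> C"
    using pres_cong.ctx[OF t, of "[s]" "tw s"] by simp
  have 2: "([s] @ ?Dj @ tw s, ?Dj @ [s] @ tw s) \<in> C"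
    using pres_cong.ctx[OF Dj_comm[of "[s]" "length w"], of "[]" "tw s"] by simp
  have 3: "(?Dj @ (s # tw s), ?Dj @ D) \<in> C"
    using pres_cong.ctx[OF tw_D[of s], of ?Dj "[]"] by simp
  have e: "?Dj @ D = replicate (m * length (s # w)) R2" by (simp add: replicate_add[symmetric] add.commute)
  have "(s # w @ t @ tw s, replicate (m * length (s # w)) R2) \<in> C"
    using pres_cong.trans[OF 1 pres_cong.trans[OF _ 3]] 2 e by simp
  then show ?case by (metis append_Cons append_assoc)
qed

lemma common_mult': "\<exists>t. (t @ w, replicate (m * length w) R2) \<in> C"
proof -
  obtain t where "(rev w @ t, replicate (m * length w) R2) \<in> C" using common_mult[of "rev w"] by auto
  then have "(rev t @ w, replicate (m * length w) R2) \<in> C" using rev_cong by fastforce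
  then show ?thesis by blast
qed

lemma key_word: "(R1 # z, R2 # y) \<in> C \<Longrightarrow> \<exists>t. (R1 # z, replicate (Suc k) R2 @ t) \<in> C"
proof -
  assume h: "(R1 # z, R2 # y) \<in> C"
  obtain n rs where p: "nf z = (n, rs)" by (cases "nf z")
  have n0: "n \<ge> 0" using nf_nonneg p by (metis fst_conv)
  have vp: "valid (n, rs)" using nf_valid p by metis
  have zc: "(R1 # z, R1 # word_of (n, rs)) \<in> C"
    using pres_cong.ctx[OF pres_cong.sym[OF word_nf[of z]], of "[R1]" "[]"] p by simp
  let ?N = "nat n"
  let ?W = "concat (map wd (rev rs))"
  have wo: "word_of (n, rs) = replicate ?N R2 @ ?W" by (simp add: word_of_def)
  show ?thesis
  proof (cases "rs \<noteq> [] \<and> ?N = k")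
    case True
    then obtain r rr where "rev rs = r # rr" by (cases "rev rs") auto
    then have W: "?W = R1 # replicate r R2 @ concat (map wd rr)" by (simp add: wd_def)
    have "(R1 # replicate k R2 @ [R1] @ (replicate r R2 @ concat (map wd rr)),
           replicate (Suc k) R2 @ (replicate r R2 @ concat (map wd rr))) \<in> C"
      using pres_cong.ctx[OF rel_step, of "[]" "replicate r R2 @ concat (map wd rr)"] by simp
    then show ?thesis using zc wo W True by (auto intro: pres_cong.trans)
  next
    case False
    show ?thesis
    proof (cases "?N \<ge> m")
      case True
      then have e: "replicate ?N R2 = D @ replicate (?N - m) R2" by (simp add: replicate_add[symmetric])
      let ?X = "replicate (?N - m) R2 @ ?W"
      have 1: "([] @ ([R1] @ D) @ ?X, [] @ (D @ [R1]) @ ?X) \<in> C" by (rule pres_cong.ctx[OF a_comm])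
      have "D @ [R1] @ ?X = replicate (Suc k) R2 @ (replicate k R2 @ [R1] @ ?X)"
        by (simp add: rep_split2)
      then show ?thesis using zc wo e 1 by (auto intro: pres_cong.trans)
    next
      case False2: False
      define q where "q = (0::int, rs @ [?N])"
      have vq: "valid q"
      proof (cases rs)
        case Nil then show ?thesis using False2 by (simp add: q_def valid_def)
      next
        case (Cons r rr)
        then show ?thesis using vp False False2 by (auto simp: q_def valid_def)
      qed
      have wq: "word_of q = R1 # word_of (n, rs)" by (simp add: q_def word_of_def wd_def)
      have "nf (R1 # z) = q"
        using nf_cong[OF zc] nf_word[OF vq] wq by (simp add: q_def)
      moreover
      obtain n' rs' where p': "nf y = (n', rs')" by (cases "nf y")
      have n0': "n' \<ge> 0" using nf_nonneg p' by (metis fst_conv)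
      have vp': "valid (n' + 1, rs')" using nf_valid[of y] p' by (simp add: valid_def)
      have yc: "(R2 # y, R2 # word_of (n', rs')) \<in> C"
        using pres_cong.ctx[OF pres_cong.sym[OF word_nf[of y]], of "[R2]" "[]"] p' by simp
      have "R2 # word_of (n', rs') = word_of (n' + 1, rs')"
        using n0' by (simp add: word_of_def nat_add_distrib)
      then have "nf (R2 # y) = (n' + 1, rs')"
        using nf_cong[OF yc] nf_word[OF vp'] n0' by simp
      ultimately have "q = (n' + 1, rs')" using nf_cong[OF h] by simp
      then show ?thesis using n0' by (simp add: q_def)
    qed
  qed
qed

lemma key_word': "(z @ [R1], y @ [R2]) \<in> C \<Longrightarrow> \<exists>t. (z @ [R1], t @ replicate (Suc k) R2) \<in> C"
proof -
  assume "(z @ [R1], y @ [R2]) \<in> C"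
  then have "(R1 # rev z, R2 # rev y) \<in> C" using rev_cong by fastforce
  then obtain t where "(R1 # rev z, replicate (Suc k) R2 @ t) \<in> C" using key_word by blast
  then have "(rev (R1 # rev z), rev (replicate (Suc k) R2 @ t)) \<in> C" by (rule rev_cong)
  then have "(z @ [R1], rev t @ replicate (Suc k) R2) \<in> C" by (simp add: replicate_append_same)
  then show ?thesis by blast
qed

end



locale lcm_setting =
  fixes S :: "'a set" and mul :: "'a \<Rightarrow> 'a \<Rightarrow> 'a" and e :: 'a and len :: "'a \<Rightarrow> nat"
    and ga gb L u v :: 'a
  assumes closed: "x \<in> S \<Longrightarrow> y \<in> S \<Longrightarrow> mul x y \<in> S"
    and e_in: "e \<in> S"
    and assoc: "x \<in> S \<Longrightarrow> y \<in> S \<Longrightarrow> z \<in> S \<Longrightarrow> mul (mul x y) z = mul x (mul y z)"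
    and unit_l: "x \<in> S \<Longrightarrow> mul e x = x"
    and unit_r: "x \<in> S \<Longrightarrow> mul x e = x"
    and cancel: "x \<in> S \<Longrightarrow> y \<in> S \<Longrightarrow> z \<in> S \<Longrightarrow> mul x y = mul x z \<Longrightarrow> y = z"
    and len_mul: "x \<in> S \<Longrightarrow> y \<in> S \<Longrightarrow> len (mul x y) = len x + len y"
    and len0: "x \<in> S \<Longrightarrow> len x = 0 \<Longrightarrow> x = e"
    and ga_in: "ga \<in> S" and gb_in: "gb \<in> S" and u_in: "u \<in> S" and v_in: "v \<in> S"
    and len_ga: "len ga > 0" and len_gb: "len gb > 0"
    and gen: "x \<in> S \<Longrightarrow> x \<noteq> e \<Longrightarrow> \<exists>x'\<in>S. x = mul ga x' \<or> x = mul gb x'"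
    and L_ga: "L = mul ga u" and L_gb: "L = mul gb v"
    and key: "c \<in> S \<Longrightarrow> \<exists>z\<in>S. c = mul ga z \<Longrightarrow> \<exists>z\<in>S. c = mul gb z \<Longrightarrow> \<exists>z\<in>S. c = mul L z"
    and cm: "x \<in> S \<Longrightarrow> y \<in> S \<Longrightarrow> \<exists>c\<in>S. (\<exists>z\<in>S. c = mul x z) \<and> (\<exists>z\<in>S. c = mul y z)"
begin

definition dv :: "'a \<Rightarrow> 'a \<Rightarrow> bool" where "dv x c = (\<exists>z\<in>S. c = mul x z)"

lemma L_in: "L \<in> S" using L_ga closed ga_in u_in by simp

lemma dv_refl: "x \<in> S \<Longrightarrow> dv x x" using e_in unit_r by (auto simp: dv_def) (metis)

lemma dv_mul: "y \<in> S \<Longrightarrow> dv x (mul x y)" by (auto simp: dv_def)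

lemma dv_e: "x \<in> S \<Longrightarrow> dv e x" using unit_l by (auto simp: dv_def)

lemma dv_trans: "x \<in> S \<Longrightarrow> y \<in> S \<Longrightarrow> dv x y \<Longrightarrow> dv y z \<Longrightarrow> dv x z"
  unfolding dv_def by (metis assoc closed)

lemma dv_lmul: "g \<in> S \<Longrightarrow> x \<in> S \<Longrightarrow> dv x y \<Longrightarrow> dv (mul g x) (mul g y)"
  unfolding dv_def by (metis assoc)

lemma dv_split: "g \<in> S \<Longrightarrow> a \<in> S \<Longrightarrow> c1 \<in> S \<Longrightarrow> dv (mul g a) (mul g c1) \<Longrightarrow> dv a c1"
  unfolding dv_def by (metis assoc cancel closed)

lemma dv_len: "x \<in> S \<Longrightarrow> dv x y \<Longrightarrow> len x \<le> len y"
  unfolding dv_def using len_mul by auto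

lemma dv_inS: "x \<in> S \<Longrightarrow> dv x y \<Longrightarrow> y \<in> S"
  unfolding dv_def using closed by auto

lemma lcm_aux:
  "w \<in> S \<Longrightarrow> x \<in> S \<Longrightarrow> y \<in> S \<Longrightarrow> dv x w \<Longrightarrow> dv y w \<Longrightarrow>
   \<exists>l\<in>S. dv x l \<and> dv y l \<and> dv l w \<and> (\<forall>c\<in>S. dv x c \<and> dv y c \<longrightarrow> dv l c)"
proof (induction "len w" arbitrary: w x y rule: less_induct)
  case less
  note IH = less.hyps
  have same: "\<exists>l\<in>S. dv (mul g x') l \<and> dv (mul g y') l \<and> dv l w \<and>
                (\<forall>c\<in>S. dv (mul g x') c \<and> dv (mul g y') c \<longrightarrow> dv l c)"
    if g: "g \<in> S" "len g > 0" and xy: "x' \<in> S" "y' \<in> S" "dv (mul g x') w" "dv (mul g y') w" for g x' y'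
  proof -
    obtain t where t: "t \<in> S" "w = mul (mul g x') t" using xy(3) by (auto simp: dv_def)
    define w' where "w' = mul x' t"
    have w'S: "w' \<in> S" using t xy closed by (simp add: w'_def)
    have ww: "w = mul g w'" using t g xy assoc by (simp add: w'_def)
    have d1: "dv x' w'" using t by (simp add: w'_def dv_mul)
    have d2: "dv y' w'" using dv_split[OF g(1) xy(2) w'S] xy(4) ww by simp
    have lw: "len w' < len w" using ww len_mul g w'S by simp
    obtain l' where l': "l' \<in> S" "dv x' l'" "dv y' l'" "dv l' w'"
      "\<forall>c\<in>S. dv x' c \<and> dv y' c \<longrightarrow> dv l' c"
      using IH[OF lw w'S xy(1,2) d1 d2] by blast
    show ?thesis
    proof (intro bexI[of _ "mul g l'"] conjI ballI impI)
      show "mul g l' \<in> S" using g l' closed by simp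
      show "dv (mul g x') (mul g l')" using dv_lmul g l' xy by simp
      show "dv (mul g y') (mul g l')" using dv_lmul g l' xy by simp
      show "dv (mul g l') w" using dv_lmul g l' ww by simp
    next
      fix c assume c: "c \<in> S" "dv (mul g x') c \<and> dv (mul g y') c"
      then obtain z where z: "z \<in> S" "c = mul (mul g x') z" by (auto simp: dv_def)
      define c1 where "c1 = mul x' z"
      have c1S: "c1 \<in> S" using z xy closed by (simp add: c1_def)
      have cc: "c = mul g c1" using z g xy assoc by (simp add: c1_def)
      have "dv x' c1" using z by (simp add: c1_def dv_mul)
      moreover have "dv y' c1" using dv_split[OF g(1) xy(2) c1S] c cc by simp
      ultimately have "dv l' c1" using l'(5) c1S by blast
      then show "dv (mul g l') c" using dv_lmul g l' cc by simp
    qed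
  qed
  have diff: "\<exists>l\<in>S. dv (mul ga x') l \<and> dv (mul gb y') l \<and> dv l w \<and>
                (\<forall>c\<in>S. dv (mul ga x') c \<and> dv (mul gb y') c \<longrightarrow> dv l c)"
    if xy: "x' \<in> S" "y' \<in> S" "dv (mul ga x') w" "dv (mul gb y') w" for x' y'
  proof -
    have "dv ga w" using dv_trans[OF ga_in closed[OF ga_in xy(1)] dv_mul[OF xy(1)] xy(3)] .
    moreover have "dv gb w" using dv_trans[OF gb_in closed[OF gb_in xy(2)] dv_mul[OF xy(2)] xy(4)] .
    ultimately have "dv L w" using key less.prems(1) by (auto simp: dv_def)
    then obtain t0 where t0: "t0 \<in> S" "w = mul L t0" by (auto simp: dv_def)
    define w' where "w' = mul u t0"
    have w'S: "w' \<in> S" using t0 u_in closed by (simp add: w'_def)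
    have ww: "w = mul ga w'" using t0 L_ga assoc ga_in u_in by (simp add: w'_def)
    have d1: "dv x' w'" using dv_split[OF ga_in xy(1) w'S] xy(3) ww by simp
    have d2: "dv u w'" using t0 by (simp add: w'_def dv_mul)
    have lw: "len w' < len w" using ww len_mul len_ga ga_in w'S by simp
    obtain l1 where l1: "l1 \<in> S" "dv x' l1" "dv u l1" "dv l1 w'"
      "\<forall>c\<in>S. dv x' c \<and> dv u c \<longrightarrow> dv l1 c"
      using IH[OF lw w'S xy(1) u_in d1 d2] by blast
    have "dv L (mul ga l1)" using dv_lmul[OF ga_in u_in l1(3)] L_ga by simp
    then obtain t1 where t1: "t1 \<in> S" "mul ga l1 = mul L t1" by (auto simp: dv_def)
    define v' where "v' = mul v t1"
    have v'S: "v' \<in> S" using t1 v_in closed by (simp add: v'_def)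
    have gl1: "mul ga l1 = mul gb v'" using t1 L_gb assoc gb_in v_in by (simp add: v'_def)
    obtain w'' where w'': "w'' \<in> S" "w = mul gb w''" using \<open>dv gb w\<close> by (auto simp: dv_def)
    have "dv (mul ga l1) w" using dv_lmul[OF ga_in l1(1) l1(4)] ww by simp
    then have d3: "dv v' w''" using dv_split[OF gb_in v'S w''(1)] gl1 w''(2) by simp
    have d4: "dv y' w''" using dv_split[OF gb_in xy(2) w''(1)] xy(4) w''(2) by simp
    have lw'': "len w'' < len w" using w'' len_mul len_gb gb_in by simp
    obtain l3 where l3: "l3 \<in> S" "dv v' l3" "dv y' l3" "dv l3 w''"
      "\<forall>c\<in>S. dv v' c \<and> dv y' c \<longrightarrow> dv l3 c"
      using IH[OF lw'' w''(1) v'S xy(2) d3 d4] by blast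
    show ?thesis
    proof (intro bexI[of _ "mul gb l3"] conjI ballI impI)
      show "mul gb l3 \<in> S" using gb_in l3 closed by simp
      have "dv (mul ga x') (mul gb v')" using dv_lmul[OF ga_in xy(1) l1(2)] gl1 by simp
      moreover have "dv (mul gb v') (mul gb l3)" using dv_lmul[OF gb_in v'S l3(2)] .
      ultimately show "dv (mul ga x') (mul gb l3)"
        using dv_trans closed ga_in gb_in xy(1) v'S by blast
      show "dv (mul gb y') (mul gb l3)" using dv_lmul[OF gb_in xy(2) l3(3)] .
      show "dv (mul gb l3) w" using dv_lmul[OF gb_in l3(1) l3(4)] w'' by simp
    next
      fix c assume c: "c \<in> S" "dv (mul ga x') c \<and> dv (mul gb y') c"
      have "dv ga c" using dv_trans[OF ga_in closed[OF ga_in xy(1)] dv_mul[OF xy(1)]] c by blast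
      moreover have "dv gb c" using dv_trans[OF gb_in closed[OF gb_in xy(2)] dv_mul[OF xy(2)]] c by blast
      ultimately have "dv L c" using key c(1) by (auto simp: dv_def)
      then obtain t where t: "t \<in> S" "c = mul L t" by (auto simp: dv_def)
      define c1 where "c1 = mul u t"
      have c1S: "c1 \<in> S" using t u_in closed by (simp add: c1_def)
      have cc: "c = mul ga c1" using t L_ga assoc ga_in u_in by (simp add: c1_def)
      have "dv x' c1" using dv_split[OF ga_in xy(1) c1S] c cc by simp
      moreover have "dv u c1" using t by (simp add: c1_def dv_mul)
      ultimately have "dv l1 c1" using l1(5) c1S by blast
      then have "dv (mul gb v') c" using dv_lmul[OF ga_in l1(1)] gl1 cc by simp
      obtain c2 where c2: "c2 \<in> S" "c = mul gb c2" using \<open>dv gb c\<close> by (auto simp: dv_def)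
      have "dv v' c2" using dv_split[OF gb_in v'S c2(1)] \<open>dv (mul gb v') c\<close> c2(2) by simp
      moreover have "dv y' c2" using dv_split[OF gb_in xy(2) c2(1)] c c2(2) by simp
      ultimately have "dv l3 c2" using l3(5) c2(1) by blast
      then show "dv (mul gb l3) c" using dv_lmul[OF gb_in l3(1)] c2 by simp
    qed
  qed
  show ?case
  proof (cases "x = e")
    case True
    then show ?thesis using less.prems dv_e dv_refl by (intro bexI[of _ y]) auto
  next
    case False
    show ?thesis
    proof (cases "y = e")
      case True
      then show ?thesis using less.prems dv_e dv_refl by (intro bexI[of _ x]) auto
    next
      case Fy: False
      obtain x' where x': "x' \<in> S" "x = mul ga x' \<or> x = mul gb x'" using gen[OF less.prems(2) False] by blast
      obtain y' where y': "y' \<in> S" "y = mul ga y' \<or> y = mul gb y'" using gen[OF less.prems(3) Fy] by blast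
      from x'(2) y'(2) show ?thesis
      proof (elim disjE)
        assume "x = mul ga x'" "y = mul ga y'"
        then show ?thesis using same[OF ga_in len_ga x'(1) y'(1)] less.prems by simp
      next
        assume "x = mul ga x'" "y = mul gb y'"
        then show ?thesis using diff[OF x'(1) y'(1)] less.prems by simp
      next
        assume a: "x = mul gb x'" "y = mul ga y'"
        then have "\<exists>l\<in>S. dv y l \<and> dv x l \<and> dv l w \<and> (\<forall>c\<in>S. dv y c \<and> dv x c \<longrightarrow> dv l c)"
          using diff[OF y'(1) x'(1)] less.prems by simp
        then show ?thesis by blast
      next
        assume "x = mul gb x'" "y = mul gb y'"
        then show ?thesis using same[OF gb_in len_gb x'(1) y'(1)] less.prems by simp
      qed
    qed
  qed
qed

theorem lcms_gcds: "has_lcms_gcds S dv"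
  unfolding has_lcms_gcds_def
proof (intro ballI conjI)
  fix a b assume ab: "a \<in> S" "b \<in> S"
  obtain w where w: "w \<in> S" "dv a w" "dv b w" using cm[OF ab] by (auto simp: dv_def)
  show "\<exists>c\<in>S. dv a c \<and> dv b c \<and> (\<forall>d\<in>S. dv a d \<and> dv b d \<longrightarrow> dv c d)"
    using lcm_aux[OF w(1) ab w(2,3)] by blast
  let ?P = "\<lambda>n. \<exists>d\<in>S. dv d a \<and> dv d b \<and> len d = n"
  have P0: "?P (len e)" using e_in dv_e ab by blast
  have bound: "\<forall>n. ?P n \<longrightarrow> n \<le> len a" using dv_len by blast
  obtain n where n: "?P n" "\<forall>n'. ?P n' \<longrightarrow> n' \<le> n" using Nat.ex_has_greatest_nat[OF P0 bound] by blast
  then obtain d where d: "d \<in> S" "dv d a" "dv d b" "len d = n" by blast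
  show "\<exists>c\<in>S. dv c a \<and> dv c b \<and> (\<forall>d\<in>S. dv d a \<and> dv d b \<longrightarrow> dv d c)"
  proof (intro bexI[of _ d] conjI ballI impI)
    fix d' assume d': "d' \<in> S" "dv d' a \<and> dv d' b"
    obtain l where l: "l \<in> S" "dv d l" "dv d' l" "dv l a" "\<forall>c\<in>S. dv d c \<and> dv d' c \<longrightarrow> dv l c"
      using lcm_aux[OF ab(1) d(1) d'(1) d(2)] d' by blast
    have "dv l b" using l(5) ab(2) d(3) d' by blast
    then have "len l \<le> n" using n(2) l(1,4) by blast
    obtain t where t: "t \<in> S" "l = mul d t" using l(2) by (auto simp: dv_def)
    then have "len t = 0" using len_mul d \<open>len l \<le> n\<close> by simp
    then have "t = e" using len0 t(1) by simp
    then have "l = d" using t unit_r d(1) by simp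
    then show "dv d' d" using l(3) by simp
  qed (use d in auto)
qed

end



context oddm
begin

abbreviation c :: "gen2 list \<Rightarrow> gen2 list set" where "c w \<equiv> cls (rel_M m) w"

abbreviation MM where "MM \<equiv> M_mon m"

lemma carrM: "carrier MM = range c" by (simp add: M_mon_def carrier_pres)
lemma multM: "c u \<otimes>\<^bsub>MM\<^esub> c v = c (u @ v)" by (simp add: M_mon_def mult_cls)
lemma oneM: "\<one>\<^bsub>MM\<^esub> = c []" by (simp add: M_mon_def one_pres)
lemma monoidM: "monoid MM" by (simp add: M_mon_def monoid_pres)
lemma c_in: "c w \<in> carrier MM" by (simp add: carrM)

lemma carrE: "x \<in> carrier MM \<Longrightarrow> (\<And>w. x = c w \<Longrightarrow> P) \<Longrightarrow> P"
  by (auto simp: carrM)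

definition lenM :: "gen2 list set \<Rightarrow> nat" where "lenM A = wt (SOME w. w \<in> A)"

lemma lenM_c: "lenM (c w) = wt w"
proof -
  have "w \<in> c w" by (simp add: pres_cong.refl)
  then have "(SOME w'. w' \<in> c w) \<in> c w" by (rule someI)
  then show ?thesis by (simp add: lenM_def wt_cong pres_cong.sym)
qed

lemma Delta_eq: "Delta m = c D" by (simp add: Delta_def)

lemma setting_l: "lcm_setting (carrier MM) (\<lambda>x y. x \<otimes>\<^bsub>MM\<^esub> y) \<one>\<^bsub>MM\<^esub> lenM
   (c [R1]) (c [R2]) (c (replicate (Suc k) R2)) (c (replicate k R2 @ [R1])) (c (replicate k R2))"
proof (unfold_locales)
  interpret monoid MM by (rule monoidM)
  show "x \<otimes>\<^bsub>MM\<^esub> y \<in> carrier MM" if "x \<in> carrier MM" "y \<in> carrier MM" for x y using that by simp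
  show "\<one>\<^bsub>MM\<^esub> \<in> carrier MM" by simp
  show "x \<otimes>\<^bsub>MM\<^esub> y \<otimes>\<^bsub>MM\<^esub> z = x \<otimes>\<^bsub>MM\<^esub> (y \<otimes>\<^bsub>MM\<^esub> z)" if "x \<in> carrier MM" "y \<in> carrier MM" "z \<in> carrier MM" for x y z
    using that m_assoc by simp
  show "\<one>\<^bsub>MM\<^esub> \<otimes>\<^bsub>MM\<^esub> x = x" "x \<otimes>\<^bsub>MM\<^esub> \<one>\<^bsub>MM\<^esub> = x" if "x \<in> carrier MM" for x using that by simp_all
  show "y = z" if h: "x \<in> carrier MM" "y \<in> carrier MM" "z \<in> carrier MM" "x \<otimes>\<^bsub>MM\<^esub> y = x \<otimes>\<^bsub>MM\<^esub> z" for x y z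
  proof -
    obtain a b d where "x = c a" "y = c b" "z = c d" using h(1-3) by (auto simp: carrM)
    then show ?thesis using h(4) by (metis cls_eq_iff lcancel multM)
  qed
  show "lenM (x \<otimes>\<^bsub>MM\<^esub> y) = lenM x + lenM y" if "x \<in> carrier MM" "y \<in> carrier MM" for x y
    using that by (auto simp: carrM multM lenM_c)
  show "x = \<one>\<^bsub>MM\<^esub>" if "x \<in> carrier MM" "lenM x = 0" for x
    using that by (auto simp: carrM oneM lenM_c dest: wt_zero)
  show "c [R1] \<in> carrier MM" "c [R2] \<in> carrier MM" "c (replicate k R2 @ [R1]) \<in> carrier MM"
    "c (replicate k R2) \<in> carrier MM" by (simp_all add: c_in)
  show "0 < lenM (c [R1])" "0 < lenM (c [R2])" by (simp_all add: lenM_c)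
  show "\<exists>x'\<in>carrier MM. x = c [R1] \<otimes>\<^bsub>MM\<^esub> x' \<or> x = c [R2] \<otimes>\<^bsub>MM\<^esub> x'"
    if h: "x \<in> carrier MM" "x \<noteq> \<one>\<^bsub>MM\<^esub>" for x
  proof -
    obtain w where w: "x = c w" using h(1) by (auto simp: carrM)
    then obtain s w' where "w = s # w'" using h(2) by (cases w) (auto simp: oneM)
    then show ?thesis using w multM[of "[s]" w'] c_in[of w'] by (cases s) auto
  qed
  show "c (replicate (Suc k) R2) = c [R1] \<otimes>\<^bsub>MM\<^esub> c (replicate k R2 @ [R1])"
    using rel_step by (simp add: multM cls_eq_iff pres_cong.sym)
  show "c (replicate (Suc k) R2) = c [R2] \<otimes>\<^bsub>MM\<^esub> c (replicate k R2)"
    by (simp add: multM)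
  show "\<exists>z\<in>carrier MM. x = c (replicate (Suc k) R2) \<otimes>\<^bsub>MM\<^esub> z"
    if h: "x \<in> carrier MM" "\<exists>z\<in>carrier MM. x = c [R1] \<otimes>\<^bsub>MM\<^esub> z" "\<exists>z\<in>carrier MM. x = c [R2] \<otimes>\<^bsub>MM\<^esub> z" for x
  proof -
    obtain z y where "x = c (R1 # z)" "x = c (R2 # y)" using h(2,3) by (auto simp: carrM multM)
    then have "(R1 # z, R2 # y) \<in> C" by (metis cls_eq_iff)
    then obtain t where t: "(R1 # z, replicate (Suc k) R2 @ t) \<in> C" using key_word by blast
    have "x = c (replicate (Suc k) R2) \<otimes>\<^bsub>MM\<^esub> c t"
      unfolding multM \<open>x = c (R1 # z)\<close> using t cls_eq_iff by metis
    then show ?thesis using c_in by blast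
  qed
  show "\<exists>c\<in>carrier MM. (\<exists>z\<in>carrier MM. c = x \<otimes>\<^bsub>MM\<^esub> z) \<and> (\<exists>z\<in>carrier MM. c = y \<otimes>\<^bsub>MM\<^esub> z)"
    if h: "x \<in> carrier MM" "y \<in> carrier MM" for x y
  proof -
    obtain u v where uv: "x = c u" "y = c v" using h by (auto simp: carrM)
    obtain t1 where t1: "(u @ t1, replicate (m * length u) R2) \<in> C" using common_mult by blast
    obtain t2 where t2: "(v @ t2, replicate (m * length v) R2) \<in> C" using common_mult by blast
    let ?N = "replicate (m * length u) R2 @ replicate (m * length v) R2"
    have "(u @ t1 @ replicate (m * length v) R2, ?N) \<in> C"
      using pres_cong.ctx[OF t1, of "[]" "replicate (m * length v) R2"] by simp
    moreover have "(v @ t2 @ replicate (m * length u) R2, ?N) \<in> C"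
      using pres_cong.ctx[OF t2, of "[]" "replicate (m * length u) R2"]
      by (simp add: replicate_add[symmetric] add.commute)
    ultimately have "c ?N = x \<otimes>\<^bsub>MM\<^esub> c (t1 @ replicate (m * length v) R2)"
       "c ?N = y \<otimes>\<^bsub>MM\<^esub> c (t2 @ replicate (m * length u) R2)"
      unfolding uv multM by (metis append_assoc cls_eq_iff)+
    then show ?thesis using c_in by blast
  qed
qed

end



context oddm
begin

lemma setting_r: "lcm_setting (carrier MM) (\<lambda>x y. y \<otimes>\<^bsub>MM\<^esub> x) \<one>\<^bsub>MM\<^esub> lenM
   (c [R1]) (c [R2]) (c (replicate (Suc k) R2)) (c (R1 # replicate k R2)) (c (replicate k R2))"
proof (unfold_locales)
  interpret monoid MM by (rule monoidM)
  show "y \<otimes>\<^bsub>MM\<^esub> x \<in> carrier MM" if "x \<in> carrier MM" "y \<in> carrier MM" for x y using that by simp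
  show "\<one>\<^bsub>MM\<^esub> \<in> carrier MM" by simp
  show "z \<otimes>\<^bsub>MM\<^esub> (y \<otimes>\<^bsub>MM\<^esub> x) = (z \<otimes>\<^bsub>MM\<^esub> y) \<otimes>\<^bsub>MM\<^esub> x" if "x \<in> carrier MM" "y \<in> carrier MM" "z \<in> carrier MM" for x y z
    using that m_assoc by simp
  show "x \<otimes>\<^bsub>MM\<^esub> \<one>\<^bsub>MM\<^esub> = x" "\<one>\<^bsub>MM\<^esub> \<otimes>\<^bsub>MM\<^esub> x = x" if "x \<in> carrier MM" for x using that by simp_all
  show "y = z" if h: "x \<in> carrier MM" "y \<in> carrier MM" "z \<in> carrier MM" "y \<otimes>\<^bsub>MM\<^esub> x = z \<otimes>\<^bsub>MM\<^esub> x" for x y z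
  proof -
    obtain a b d where "x = c a" "y = c b" "z = c d" using h(1-3) by (auto simp: carrM)
    then show ?thesis using h(4) by (metis cls_eq_iff rcancel multM)
  qed
  show "lenM (y \<otimes>\<^bsub>MM\<^esub> x) = lenM x + lenM y" if "x \<in> carrier MM" "y \<in> carrier MM" for x y
    using that by (auto simp: carrM multM lenM_c)
  show "x = \<one>\<^bsub>MM\<^esub>" if "x \<in> carrier MM" "lenM x = 0" for x
    using that by (auto simp: carrM oneM lenM_c dest: wt_zero)
  show "c [R1] \<in> carrier MM" "c [R2] \<in> carrier MM" "c (R1 # replicate k R2) \<in> carrier MM"
    "c (replicate k R2) \<in> carrier MM" by (simp_all add: c_in)
  show "0 < lenM (c [R1])" "0 < lenM (c [R2])" by (simp_all add: lenM_c)
  show "\<exists>x'\<in>carrier MM. x = x' \<otimes>\<^bsub>MM\<^esub> c [R1] \<or> x = x' \<otimes>\<^bsub>MM\<^esub> c [R2]"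
    if h: "x \<in> carrier MM" "x \<noteq> \<one>\<^bsub>MM\<^esub>" for x
  proof -
    obtain w where w: "x = c w" using h(1) by (auto simp: carrM)
    then obtain s w' where "w = w' @ [s]" using h(2) by (cases w rule: rev_cases) (auto simp: oneM)
    then show ?thesis using w multM[of w' "[s]"] c_in[of w'] by (cases s) auto
  qed
  show "c (replicate (Suc k) R2) = c (R1 # replicate k R2) \<otimes>\<^bsub>MM\<^esub> c [R1]"
    using rel_step by (simp add: multM cls_eq_iff pres_cong.sym)
  show "c (replicate (Suc k) R2) = c (replicate k R2) \<otimes>\<^bsub>MM\<^esub> c [R2]"
    by (simp add: multM replicate_append_same)
  show "\<exists>z\<in>carrier MM. x = z \<otimes>\<^bsub>MM\<^esub> c (replicate (Suc k) R2)"
    if h: "x \<in> carrier MM" "\<exists>z\<in>carrier MM. x = z \<otimes>\<^bsub>MM\<^esub> c [R1]" "\<exists>z\<in>carrier MM. x = z \<otimes>\<^bsub>MM\<^esub> c [R2]" for x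
  proof -
    obtain z y where "x = c (z @ [R1])" "x = c (y @ [R2])" using h(2,3) by (auto simp: carrM multM)
    then have "(z @ [R1], y @ [R2]) \<in> C" by (metis cls_eq_iff)
    then obtain t where t: "(z @ [R1], t @ replicate (Suc k) R2) \<in> C" using key_word' by blast
    have "x = c t \<otimes>\<^bsub>MM\<^esub> c (replicate (Suc k) R2)"
      unfolding multM \<open>x = c (z @ [R1])\<close> using t cls_eq_iff by metis
    then show ?thesis using c_in by blast
  qed
  show "\<exists>c\<in>carrier MM. (\<exists>z\<in>carrier MM. c = z \<otimes>\<^bsub>MM\<^esub> x) \<and> (\<exists>z\<in>carrier MM. c = z \<otimes>\<^bsub>MM\<^esub> y)"
    if h: "x \<in> carrier MM" "y \<in> carrier MM" for x y
  proof -
    obtain u v where uv: "x = c u" "y = c v" using h by (auto simp: carrM)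
    obtain t1 where t1: "(t1 @ u, replicate (m * length u) R2) \<in> C" using common_mult' by blast
    obtain t2 where t2: "(t2 @ v, replicate (m * length v) R2) \<in> C" using common_mult' by blast
    let ?N = "replicate (m * length v) R2 @ replicate (m * length u) R2"
    have "(replicate (m * length v) R2 @ t1 @ u, ?N) \<in> C"
      using pres_cong.ctx[OF t1, of "replicate (m * length v) R2" "[]"] by simp
    moreover have "(replicate (m * length u) R2 @ t2 @ v, ?N) \<in> C"
      using pres_cong.ctx[OF t2, of "replicate (m * length u) R2" "[]"]
      by (simp add: replicate_add[symmetric] add.commute)
    ultimately have "c ?N = c (replicate (m * length v) R2 @ t1) \<otimes>\<^bsub>MM\<^esub> x"
       "c ?N = c (replicate (m * length u) R2 @ t2) \<otimes>\<^bsub>MM\<^esub> y"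
      unfolding uv multM by (metis append_assoc cls_eq_iff)+
    then show ?thesis using c_in by blast
  qed
qed

lemma ldvd_eq: "ldvd MM = lcm_setting.dv (carrier MM) (\<lambda>x y. x \<otimes>\<^bsub>MM\<^esub> y)"
  by (simp add: fun_eq_iff ldvd_def lcm_setting.dv_def[OF setting_l])

lemma rdvd_eq: "rdvd MM = lcm_setting.dv (carrier MM) (\<lambda>x y. y \<otimes>\<^bsub>MM\<^esub> x)"
  by (simp add: fun_eq_iff rdvd_def lcm_setting.dv_def[OF setting_r])

lemma lcms_l: "has_lcms_gcds (carrier MM) (ldvd MM)"
  unfolding ldvd_eq by (rule lcm_setting.lcms_gcds[OF setting_l])

lemma lcms_r: "has_lcms_gcds (carrier MM) (rdvd MM)"
  unfolding rdvd_eq by (rule lcm_setting.lcms_gcds[OF setting_r])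

lemma Delta_central: "x \<in> carrier MM \<Longrightarrow> x \<otimes>\<^bsub>MM\<^esub> Delta m = Delta m \<otimes>\<^bsub>MM\<^esub> x"
proof -
  assume "x \<in> carrier MM"
  then obtain w where w: "x = c w" by (auto simp: carrM)
  have "c (w @ D) = c (D @ w)" using D_comm[of w] cls_eq_iff by metis
  then show ?thesis by (simp add: w Delta_eq multM)
qed

lemma lcancelM: "x \<in> carrier MM \<Longrightarrow> y \<in> carrier MM \<Longrightarrow> z \<in> carrier MM \<Longrightarrow>
   x \<otimes>\<^bsub>MM\<^esub> y = x \<otimes>\<^bsub>MM\<^esub> z \<Longrightarrow> y = z"
  using lcm_setting.cancel[OF setting_l] by blast

lemma rcancelM: "x \<in> carrier MM \<Longrightarrow> y \<in> carrier MM \<Longrightarrow> z \<in> carrier MM \<Longrightarrow>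
   y \<otimes>\<^bsub>MM\<^esub> x = z \<otimes>\<^bsub>MM\<^esub> x \<Longrightarrow> y = z"
  using lcm_setting.cancel[OF setting_r] by blast

lemma gen_div: "ldvd MM (c [s]) (Delta m)"
  unfolding ldvd_def Delta_eq using tw_D[of s] c_in
  by (intro bexI[of _ "c (tw s)"]) (auto simp: multM cls_eq_iff pres_cong.sym)

lemma finite_gen2: "finite (UNIV :: gen2 set)"
proof -
  have "UNIV = {R1, R2}" using gen2.exhaust by auto
  then show ?thesis by (metis finite.emptyI finite_insert)
qed

theorem garside_M: "garside_monoid MM (Delta m)"
  unfolding garside_monoid_def
proof (intro conjI)
  interpret monoid MM by (rule monoidM)
  show "monoid MM" by (rule monoidM)
  show DM: "Delta m \<in> carrier MM" by (simp add: Delta_eq c_in)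
  show "\<forall>a\<in>carrier MM. \<forall>b\<in>carrier MM. \<forall>c\<in>carrier MM.
      (a \<otimes>\<^bsub>MM\<^esub> b = a \<otimes>\<^bsub>MM\<^esub> c \<longrightarrow> b = c) \<and> (b \<otimes>\<^bsub>MM\<^esub> a = c \<otimes>\<^bsub>MM\<^esub> a \<longrightarrow> b = c)"
  proof (intro ballI conjI impI)
    fix a b c' assume "a \<in> carrier MM" "b \<in> carrier MM" "c' \<in> carrier MM"
    then show "a \<otimes>\<^bsub>MM\<^esub> b = a \<otimes>\<^bsub>MM\<^esub> c' \<Longrightarrow> b = c'" "b \<otimes>\<^bsub>MM\<^esub> a = c' \<otimes>\<^bsub>MM\<^esub> a \<Longrightarrow> b = c'"
      using lcancelM rcancelM by blast+
  qed
  show "\<exists>len :: gen2 list set \<Rightarrow> nat. (\<forall>a\<in>carrier MM. \<forall>b\<in>carrier MM. len a + len b \<le> len (a \<otimes>\<^bsub>MM\<^esub> b)) \<and>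
      (\<forall>a\<in>carrier MM. a \<noteq> \<one>\<^bsub>MM\<^esub> \<longrightarrow> len a \<noteq> 0)"
  proof -
    have 1: "\<forall>a\<in>carrier MM. \<forall>b\<in>carrier MM. lenM a + lenM b \<le> lenM (a \<otimes>\<^bsub>MM\<^esub> b)"
    proof (intro ballI)
      fix a b assume "a \<in> carrier MM" "b \<in> carrier MM"
      then show "lenM a + lenM b \<le> lenM (a \<otimes>\<^bsub>MM\<^esub> b)"
        using lcm_setting.len_mul[OF setting_l, of a b] by simp
    qed
    have 2: "\<forall>a\<in>carrier MM. a \<noteq> \<one>\<^bsub>MM\<^esub> \<longrightarrow> lenM a \<noteq> 0"
    proof (intro ballI impI)
      fix a assume "a \<in> carrier MM" "a \<noteq> \<one>\<^bsub>MM\<^esub>"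
      then show "lenM a \<noteq> 0" using lcm_setting.len0[OF setting_l, of a] by blast
    qed
    show ?thesis
      apply (rule exI)
      apply (rule conjI)
       apply (rule 1)
      apply (rule 2)
      done
  qed
  show "has_lcms_gcds (carrier MM) (ldvd MM)" by (rule lcms_l)
  show "has_lcms_gcds (carrier MM) (rdvd MM)" by (rule lcms_r)
  show "{a \<in> carrier MM. ldvd MM a (Delta m)} = {a \<in> carrier MM. rdvd MM a (Delta m)}"
  proof (intro Collect_cong conj_cong refl iffI)
    fix a assume a: "a \<in> carrier MM" and l: "ldvd MM a (Delta m)"
    then obtain b where b: "b \<in> carrier MM" "Delta m = a \<otimes>\<^bsub>MM\<^esub> b" by (auto simp: ldvd_def)
    have "a \<otimes>\<^bsub>MM\<^esub> (b \<otimes>\<^bsub>MM\<^esub> a) = (a \<otimes>\<^bsub>MM\<^esub> b) \<otimes>\<^bsub>MM\<^esub> a" using a b by (simp add: m_assoc)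
    also have "\<dots> = Delta m \<otimes>\<^bsub>MM\<^esub> a" using b by simp
    also have "\<dots> = a \<otimes>\<^bsub>MM\<^esub> Delta m" using Delta_central a by simp
    finally have "b \<otimes>\<^bsub>MM\<^esub> a = Delta m" by (rule lcancelM[OF a m_closed[OF b(1) a] DM])
    then show "rdvd MM a (Delta m)" using b by (auto simp: rdvd_def)
  next
    fix a assume a: "a \<in> carrier MM" and l: "rdvd MM a (Delta m)"
    then obtain b where b: "b \<in> carrier MM" "Delta m = b \<otimes>\<^bsub>MM\<^esub> a" by (auto simp: rdvd_def)
    have "(a \<otimes>\<^bsub>MM\<^esub> b) \<otimes>\<^bsub>MM\<^esub> a = a \<otimes>\<^bsub>MM\<^esub> (b \<otimes>\<^bsub>MM\<^esub> a)" using a b by (simp add: m_assoc)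
    also have "\<dots> = a \<otimes>\<^bsub>MM\<^esub> Delta m" using b by simp
    also have "\<dots> = Delta m \<otimes>\<^bsub>MM\<^esub> a" using Delta_central a by simp
    finally have "a \<otimes>\<^bsub>MM\<^esub> b = Delta m" by (rule rcancelM[OF a m_closed[OF a b(1)] DM])
    then show "ldvd MM a (Delta m)" using b by (auto simp: ldvd_def)
  qed
  show "\<forall>x\<in>carrier MM. \<exists>l. set l \<subseteq> {a \<in> carrier MM. ldvd MM a (Delta m)} \<and>
      x = foldr (\<lambda>a b. a \<otimes>\<^bsub>MM\<^esub> b) l \<one>\<^bsub>MM\<^esub>"
  proof
    fix x assume "x \<in> carrier MM"
    then obtain w where w: "x = c w" by (auto simp: carrM)
    show "\<exists>l. set l \<subseteq> {a \<in> carrier MM. ldvd MM a (Delta m)} \<and> x = foldr (\<lambda>a b. a \<otimes>\<^bsub>MM\<^esub> b) l \<one>\<^bsub>MM\<^esub>"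
      using gen_div c_in cls_foldr[of "rel_M m" w] w
      by (intro exI[of _ "map (\<lambda>s. c [s]) w"]) (auto simp: M_mon_def)
  qed
  show "finite {a \<in> carrier MM. ldvd MM a (Delta m)}"
  proof (rule finite_subset)
    show "{a \<in> carrier MM. ldvd MM a (Delta m)} \<subseteq> c ` {w. set w \<subseteq> UNIV \<and> length w \<le> 2 * m}"
    proof
      fix a assume "a \<in> {a \<in> carrier MM. ldvd MM a (Delta m)}"
      then have a: "a \<in> carrier MM" "ldvd MM a (Delta m)" by auto
      obtain w where w: "a = c w" using a(1) carrM by auto
      obtain B where B: "B \<in> carrier MM" "Delta m = a \<otimes>\<^bsub>MM\<^esub> B" using a(2) unfolding ldvd_def by blast
      obtain v where v: "B = c v" using B(1) carrM by auto
      have "c D = c (w @ v)" using B(2) unfolding w v Delta_eq multM .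
      then have "lenM (c D) = lenM (c (w @ v))" by simp
      then have "wt w + wt v = wt D" unfolding lenM_c by simp
      then have "length w \<le> 2 * m" using length_le_wt[of w] by simp
      then have wb: "a = c w" "length w \<le> 2 * m" using w by auto
      then show "a \<in> c ` {w. set w \<subseteq> UNIV \<and> length w \<le> 2 * m}" using wb by auto
    qed
    show "finite (c ` {w. set w \<subseteq> UNIV \<and> length w \<le> 2 * m})"
      using finite_lists_length_le[OF finite_gen2] by simp
  qed
qed

end



context group
begin

lemma inv_from_prod:
  assumes "a \<in> carrier G" "b \<in> carrier G" "d \<in> carrier G" "a \<otimes> b = d"
  shows "inv a = b \<otimes> inv d"
proof -
  have "a \<otimes> (b \<otimes> inv d) = \<one>" using assms by (simp add: m_assoc[symmetric])
  then have "(b \<otimes> inv d) \<otimes> a = \<one>" using assms by (simp add: inv_comm)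
  then show ?thesis using assms inv_equality by simp
qed

lemma inv_comm_elem:
  assumes "a \<in> carrier G" "d \<in> carrier G" "a \<otimes> d = d \<otimes> a"
  shows "inv d \<otimes> a = a \<otimes> inv d"
proof -
  have "inv d \<otimes> a = inv d \<otimes> (a \<otimes> d) \<otimes> inv d" using assms(1,2) by (simp add: m_assoc)
  also have "\<dots> = inv d \<otimes> (d \<otimes> a) \<otimes> inv d" using assms(3) by simp
  also have "\<dots> = a \<otimes> inv d" using assms(1,2) by (simp add: m_assoc[symmetric])
  finally show ?thesis .
qed

end

context oddm
begin

abbreviation GR where "GR \<equiv> group_rels (rel_M m)"
abbreviation BB where "BB \<equiv> B_grp m"
abbreviation T :: "gen2 list \<Rightarrow> (gen2 \<times> bool) list" where "T w \<equiv> map (\<lambda>a. (a, True)) w"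

lemma carrB: "carrier BB = range (cls GR)" by (simp add: B_grp_def pres_group_def carrier_pres)
lemma multB: "cls GR u \<otimes>\<^bsub>BB\<^esub> cls GR v = cls GR (u @ v)" by (simp add: B_grp_def pres_group_def mult_cls)
lemma oneB: "\<one>\<^bsub>BB\<^esub> = cls GR []" by (simp add: B_grp_def pres_group_def one_pres)
lemma groupB: "group BB" by (simp add: B_grp_def group_pres)
lemma cB_in: "cls GR w \<in> carrier BB" by (simp add: carrB)

lemma T_cong: "(u, v) \<in> C \<Longrightarrow> (T u, T v) \<in> pres_cong GR"
proof (induction rule: pres_cong.induct)
  case (base u v)
  then show ?case by (intro pres_cong.base) (auto simp: group_rels_def)
next
  case (ctx u v x y)
  then show ?case using pres_cong.ctx[OF ctx.IH, of "T x" "T y"] by simp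
qed (auto intro: pres_cong.intros)

lemma incl_c: "pres_incl (rel_M m) (c w) = cls GR (T w)"
proof
  show "pres_incl (rel_M m) (c w) \<subseteq> cls GR (T w)"
  proof
    fix z assume "z \<in> pres_incl (rel_M m) (c w)"
    then obtain w' where "(w, w') \<in> C" "(T w', z) \<in> pres_cong GR" by (auto simp: pres_incl_def)
    then show "z \<in> cls GR (T w)" using T_cong pres_cong.trans by fastforce
  qed
next
  show "cls GR (T w) \<subseteq> pres_incl (rel_M m) (c w)"
    unfolding pres_incl_def by (auto intro: pres_cong.refl)
qed

abbreviation ii where "ii \<equiv> pres_incl (rel_M m)"

lemma incl_hom: "ii \<in> hom MM BB"
proof (rule homI)
  fix x assume "x \<in> carrier MM"
  then show "ii x \<in> carrier BB" by (auto simp: carrM incl_c cB_in)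
next
  fix x y assume "x \<in> carrier MM" "y \<in> carrier MM"
  then obtain u v where "x = c u" "y = c v" by (auto simp: carrM)
  then show "ii (x \<otimes>\<^bsub>MM\<^esub> y) = ii x \<otimes>\<^bsub>BB\<^esub> ii y" by (simp add: multM incl_c multB)
qed

lemma incl_one: "ii \<one>\<^bsub>MM\<^esub> = \<one>\<^bsub>BB\<^esub>"
  by (simp add: oneM incl_c oneB)

lemma incl_inj: "inj_on ii (carrier MM)"
proof (rule inj_onI)
  fix x y assume "x \<in> carrier MM" "y \<in> carrier MM" "ii x = ii y"
  then obtain u v where uv: "x = c u" "y = c v" "cls GR (T u) = cls GR (T v)" by (auto simp: carrM incl_c)
  then have "(T u, T v) \<in> pres_cong GR" by (simp add: cls_eq_iff)
  then have "runG (T u) base = runG (T v) base" using runG_cong valid_base by blast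
  then have "nf u = nf v" by (simp add: runG_map nf_def)
  then show "x = y" using uv by (simp add: cls_eq_iff cong_iff_nf)
qed

lemma fractions: "\<forall>g\<in>carrier BB. \<exists>a\<in>carrier MM. \<exists>b\<in>carrier MM. g = ii a \<otimes>\<^bsub>BB\<^esub> inv\<^bsub>BB\<^esub> (ii b)"
proof
  interpret B: group BB by (rule groupB)
  interpret M: monoid MM by (rule monoidM)
  have iin: "ii x \<in> carrier BB" if "x \<in> carrier MM" for x using incl_hom that by (rule hom_in_carrier)
  have imul: "ii (x \<otimes>\<^bsub>MM\<^esub> y) = ii x \<otimes>\<^bsub>BB\<^esub> ii y" if "x \<in> carrier MM" "y \<in> carrier MM" for x y
    using incl_hom that by (simp add: hom_mult)
  have DM: "Delta m \<in> carrier MM" by (simp add: Delta_eq c_in)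
  have claim: "\<exists>x\<in>carrier MM. \<exists>y\<in>carrier MM. cls GR w = ii x \<otimes>\<^bsub>BB\<^esub> inv\<^bsub>BB\<^esub> (ii y) \<and>
      (\<forall>z\<in>carrier MM. z \<otimes>\<^bsub>MM\<^esub> y = y \<otimes>\<^bsub>MM\<^esub> z)" for w
  proof (induction w)
    case Nil
    have "cls GR [] = ii \<one>\<^bsub>MM\<^esub> \<otimes>\<^bsub>BB\<^esub> inv\<^bsub>BB\<^esub> (ii \<one>\<^bsub>MM\<^esub>)"
      by (simp add: incl_one oneB[symmetric])
    then show ?case by (intro bexI[of _ "\<one>\<^bsub>MM\<^esub>"]) auto
  next
    case (Cons l w)
    then obtain x y where xy: "x \<in> carrier MM" "y \<in> carrier MM" "cls GR w = ii x \<otimes>\<^bsub>BB\<^esub> inv\<^bsub>BB\<^esub> (ii y)"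
      "\<forall>z\<in>carrier MM. z \<otimes>\<^bsub>MM\<^esub> y = y \<otimes>\<^bsub>MM\<^esub> z" by blast
    obtain s e where l: "l = (s, e)" by (cases l)
    have split: "cls GR (l # w) = cls GR [l] \<otimes>\<^bsub>BB\<^esub> cls GR w" by (simp add: multB)
    show ?case
    proof (cases e)
      case True
      have "cls GR [l] = ii (c [s])" using l True by (simp add: incl_c)
      then have "cls GR (l # w) = ii (c [s] \<otimes>\<^bsub>MM\<^esub> x) \<otimes>\<^bsub>BB\<^esub> inv\<^bsub>BB\<^esub> (ii y)"
        using split xy iin imul c_in by (simp add: B.m_assoc)
      then show ?thesis using xy c_in by blast
    next
      case False
      let ?t = "c (tw s)"
      let ?D = "ii (Delta m)"
      have tin: "?t \<in> carrier MM" by (simp add: c_in)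
      have "cls GR [l] = inv\<^bsub>BB\<^esub> (cls GR [(s, True)])" using l False
        using pres_group_inv_gen[of "rel_M m" s] by (simp add: B_grp_def)
      also have "cls GR [(s, True)] = ii (c [s])" by (simp add: incl_c)
      finally have l1: "cls GR [l] = inv\<^bsub>BB\<^esub> (ii (c [s]))" .
      have "c [s] \<otimes>\<^bsub>MM\<^esub> ?t = Delta m" using tw_D[of s] by (simp add: multM Delta_eq cls_eq_iff)
      then have "ii (c [s]) \<otimes>\<^bsub>BB\<^esub> ii ?t = ?D" using imul c_in by metis
      then have l2: "inv\<^bsub>BB\<^esub> (ii (c [s])) = ii ?t \<otimes>\<^bsub>BB\<^esub> inv\<^bsub>BB\<^esub> ?D"
        using B.inv_from_prod iin c_in DM by blast
      have "x \<otimes>\<^bsub>MM\<^esub> Delta m = Delta m \<otimes>\<^bsub>MM\<^esub> x" using Delta_central xy(1) by simp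
      then have "ii x \<otimes>\<^bsub>BB\<^esub> ?D = ?D \<otimes>\<^bsub>BB\<^esub> ii x" using imul xy(1) DM by metis
      then have l3: "inv\<^bsub>BB\<^esub> ?D \<otimes>\<^bsub>BB\<^esub> ii x = ii x \<otimes>\<^bsub>BB\<^esub> inv\<^bsub>BB\<^esub> ?D"
        using B.inv_comm_elem iin xy(1) DM by blast
      have "cls GR (l # w) = ii ?t \<otimes>\<^bsub>BB\<^esub> (inv\<^bsub>BB\<^esub> ?D \<otimes>\<^bsub>BB\<^esub> ii x) \<otimes>\<^bsub>BB\<^esub> inv\<^bsub>BB\<^esub> (ii y)"
        using split xy l1 l2 iin tin DM by (simp add: B.m_assoc)
      also have "\<dots> = ii ?t \<otimes>\<^bsub>BB\<^esub> ii x \<otimes>\<^bsub>BB\<^esub> (inv\<^bsub>BB\<^esub> ?D \<otimes>\<^bsub>BB\<^esub> inv\<^bsub>BB\<^esub> (ii y))"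
        using l3 iin tin DM xy by (simp add: B.m_assoc)
      also have "inv\<^bsub>BB\<^esub> ?D \<otimes>\<^bsub>BB\<^esub> inv\<^bsub>BB\<^esub> (ii y) = inv\<^bsub>BB\<^esub> (ii (y \<otimes>\<^bsub>MM\<^esub> Delta m))"
        using imul xy(2) DM iin by (simp add: B.inv_mult_group)
      also have "ii ?t \<otimes>\<^bsub>BB\<^esub> ii x = ii (?t \<otimes>\<^bsub>MM\<^esub> x)" using imul tin xy(1) by simp
      finally have eq: "cls GR (l # w) = ii (?t \<otimes>\<^bsub>MM\<^esub> x) \<otimes>\<^bsub>BB\<^esub> inv\<^bsub>BB\<^esub> (ii (y \<otimes>\<^bsub>MM\<^esub> Delta m))" .
      have cent: "\<forall>z\<in>carrier MM. z \<otimes>\<^bsub>MM\<^esub> (y \<otimes>\<^bsub>MM\<^esub> Delta m) = (y \<otimes>\<^bsub>MM\<^esub> Delta m) \<otimes>\<^bsub>MM\<^esub> z"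
      proof
        fix z assume z: "z \<in> carrier MM"
        have "z \<otimes>\<^bsub>MM\<^esub> (y \<otimes>\<^bsub>MM\<^esub> Delta m) = (z \<otimes>\<^bsub>MM\<^esub> y) \<otimes>\<^bsub>MM\<^esub> Delta m"
          using z xy(2) DM by (simp add: M.m_assoc)
        also have "\<dots> = (y \<otimes>\<^bsub>MM\<^esub> z) \<otimes>\<^bsub>MM\<^esub> Delta m" using xy(4) z by simp
        also have "\<dots> = y \<otimes>\<^bsub>MM\<^esub> (z \<otimes>\<^bsub>MM\<^esub> Delta m)" using z xy(2) DM by (simp add: M.m_assoc)
        also have "\<dots> = y \<otimes>\<^bsub>MM\<^esub> (Delta m \<otimes>\<^bsub>MM\<^esub> z)" using Delta_central z by simp
        also have "\<dots> = (y \<otimes>\<^bsub>MM\<^esub> Delta m) \<otimes>\<^bsub>MM\<^esub> z" using z xy(2) DM by (simp add: M.m_assoc)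
        finally show "z \<otimes>\<^bsub>MM\<^esub> (y \<otimes>\<^bsub>MM\<^esub> Delta m) = (y \<otimes>\<^bsub>MM\<^esub> Delta m) \<otimes>\<^bsub>MM\<^esub> z" .
      qed
      show ?thesis using eq cent tin xy DM by blast
    qed
  qed
  fix g assume "g \<in> carrier BB"
  then obtain w where "g = cls GR w" by (auto simp: carrB)
  then show "\<exists>a\<in>carrier MM. \<exists>b\<in>carrier MM. g = ii a \<otimes>\<^bsub>BB\<^esub> inv\<^bsub>BB\<^esub> (ii b)" using claim by blast
qed

theorem fractions_M: "group_of_fractions BB MM ii"
  unfolding group_of_fractions_def
  using groupB incl_hom incl_one incl_inj fractions by blast

end



lemma alt_Suc: "alt_word x y (Suc n) = x # alt_word y x n"
  unfolding alt_word_def by (simp add: map_upt_Suc del: upt_Suc)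

lemma alt_0: "alt_word x y 0 = []" by (simp add: alt_word_def)

lemma alt_odd: "alt_word x y (2 * k + 1) = concat (replicate k [x, y]) @ [x]"
  by (induction k) (auto simp: alt_Suc alt_0)

lemma concat_swap: "x # concat (replicate k [y, x]) = concat (replicate k [x, y]) @ [x]"
  by (induction k) auto

lemma evalH_word:
  assumes "\<And>x. f x = cls (group_rels R) (fw x)"
  shows "evalH (pres_group R) f (map (\<lambda>a. (a, True)) w) = cls (group_rels R) (concat (map fw w))"
  by (induction w) (auto simp: assms pres_group_def mult_cls one_pres)

context group
begin

lemma cancel_inv1 [simp]: "a \<in> carrier G \<Longrightarrow> c \<in> carrier G \<Longrightarrow> a \<otimes> (inv a \<otimes> c) = c"
  by (simp add: m_assoc[symmetric])

lemma cancel_inv2 [simp]: "a \<in> carrier G \<Longrightarrow> c \<in> carrier G \<Longrightarrow> inv a \<otimes> (a \<otimes> c) = c"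
  by (simp add: m_assoc[symmetric])

lemma evalH_T: "(\<And>x. f x \<in> carrier G) \<Longrightarrow> evalH G f (map (\<lambda>a. (a, True)) (u @ v)) =
    evalH G f (map (\<lambda>a. (a, True)) u) \<otimes> evalH G f (map (\<lambda>a. (a, True)) v)"
  by (simp add: evalH_append)

lemma evalH_alt: "(\<And>x. f x \<in> carrier G) \<Longrightarrow>
   evalH G f (map (\<lambda>a. (a, True)) (concat (replicate k [x, y]))) = (f x \<otimes> f y) [^] k"
proof (induction k)
  case 0 then show ?case by simp
next
  case (Suc k)
  have "evalH G f (map (\<lambda>a. (a, True)) (concat (replicate (Suc k) [x, y]))) =
      f x \<otimes> (f y \<otimes> evalH G f (map (\<lambda>a. (a, True)) (concat (replicate k [x, y]))))" by simp
  also have "\<dots> = (f x \<otimes> f y) \<otimes> (f x \<otimes> f y) [^] k" using Suc by (simp add: m_assoc)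
  also have "\<dots> = (f x \<otimes> f y) [^] Suc k" using nat_pow_Suc2[of "f x \<otimes> f y" k] Suc.prems by simp
  finally show ?case .
qed

lemma evalH_rep: "(\<And>x. f x \<in> carrier G) \<Longrightarrow>
   evalH G f (map (\<lambda>a. (a, True)) (replicate j x)) = f x [^] j"
proof (induction j)
  case (Suc j)
  then show ?case using nat_pow_Suc2[of "f x" j] by simp
qed simp

lemma conj_pow: "a \<in> carrier G \<Longrightarrow> b \<in> carrier G \<Longrightarrow> (inv a \<otimes> b \<otimes> a) [^] (k::nat) = inv a \<otimes> b [^] k \<otimes> a"
proof (induction k)
  case 0 then show ?case by simp
next
  case (Suc k)
  have "(inv a \<otimes> b \<otimes> a) [^] Suc k = (inv a \<otimes> b [^] k \<otimes> a) \<otimes> (inv a \<otimes> b \<otimes> a)" using Suc by simp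
  also have "\<dots> = inv a \<otimes> (b [^] k \<otimes> (a \<otimes> inv a) \<otimes> b) \<otimes> a" using Suc.prems by (simp add: m_assoc)
  also have "\<dots> = inv a \<otimes> b [^] Suc k \<otimes> a" using Suc.prems by (simp add: m_assoc)
  finally show ?case .
qed

lemma evalH_hom:
  assumes "group H" "h \<in> hom G H" "\<And>x. f x \<in> carrier G"
  shows "h (evalH G f w) = evalH H (h \<circ> f) w"
proof -
  have "group_hom G H h" unfolding group_hom_def group_hom_axioms_def using assms(1,2) is_group by simp
  then interpret gh: group_hom G H h .
  show ?thesis
    by (induction w) (auto simp: evalH_closed assms(3))
qed

end

context oddm
begin

abbreviation RA where "RA \<equiv> {(alt_word R1 R2 m, alt_word R2 R1 m)}"
abbreviation GA where "GA \<equiv> group_rels RA"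
abbreviation AA where "AA \<equiv> artin_I2 m"

lemma AA_def': "AA = pres_group RA" by (simp add: artin_I2_def)
lemma carrA: "carrier AA = range (cls GA)" by (simp add: AA_def' pres_group_def carrier_pres)
lemma multA: "cls GA u \<otimes>\<^bsub>AA\<^esub> cls GA v = cls GA (u @ v)" by (simp add: AA_def' pres_group_def mult_cls)
lemma groupA: "group AA" by (simp add: AA_def' group_pres)
lemma cA_in: "cls GA w \<in> carrier AA" by (simp add: carrA)

definition fw :: "gen2 \<Rightarrow> (gen2 \<times> bool) list" where
  "fw x = (if x = R1 then [(R1, True)] else [(R1, True), (R2, True)])"

definition ff :: "gen2 \<Rightarrow> (gen2 \<times> bool) list set" where "ff x = cls GA (fw x)"

definition gw :: "gen2 \<Rightarrow> (gen2 \<times> bool) list" where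
  "gw x = (if x = R1 then [(R1, True)] else [(R1, False), (R2, True)])"

definition gg :: "gen2 \<Rightarrow> (gen2 \<times> bool) list set" where "gg x = cls GR (gw x)"

lemma ff_in: "ff x \<in> carrier AA" by (simp add: ff_def cA_in)
lemma gg_in: "gg x \<in> carrier BB" by (simp add: gg_def cB_in)

lemma m_alt: "alt_word x y m = concat (replicate k [x, y]) @ [x]"
  using alt_odd[of x y k] mk by simp

lemma concat_rep_comm: "concat (replicate k L) @ L = L @ concat (replicate k L)"
  by (induction k) auto

lemma F_rel: "(u, v) \<in> rel_M m \<Longrightarrow> evalH AA ff (T u) = evalH AA ff (T v)"
proof -
  assume "(u, v) \<in> rel_M m"
  then have uv: "u = R1 # replicate k R2 @ [R1]" "v = replicate (Suc k) R2" by (auto simp: rel_eq)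
  let ?s = "(R1, True)" and ?t = "(R2, True)"
  have cu: "concat (map fw u) = [?s] @ (concat (replicate k [?s, ?t]) @ [?s])"
    using uv by (simp add: fw_def)
  have cv: "concat (map fw v) = concat (replicate (Suc k) [?s, ?t])"
    using uv by (simp add: fw_def del: replicate_Suc)
  have ta: "T (alt_word R1 R2 m) = concat (replicate k [?s, ?t]) @ [?s]"
    by (simp add: m_alt map_concat)
  have tb: "T (alt_word R2 R1 m) = concat (replicate k [?t, ?s]) @ [?t]"
    by (simp add: m_alt map_concat)
  have "(T (alt_word R1 R2 m), T (alt_word R2 R1 m)) \<in> pres_cong GA"
    by (rule pres_cong.base) (auto simp: group_rels_def)
  then have "([?s] @ (concat (replicate k [?s, ?t]) @ [?s]) @ [], [?s] @ (concat (replicate k [?t, ?s]) @ [?t]) @ []) \<in> pres_cong GA"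
    unfolding ta tb by (rule pres_cong.ctx)
  moreover have "[?s] @ (concat (replicate k [?t, ?s]) @ [?t]) = concat (replicate (Suc k) [?s, ?t])"
  proof -
    have "[?s] @ (concat (replicate k [?t, ?s]) @ [?t]) = (?s # concat (replicate k [?t, ?s])) @ [?t]" by simp
    also have "\<dots> = concat (replicate k [?s, ?t]) @ [?s, ?t]" by (simp add: concat_swap)
    also have "\<dots> = concat (replicate (Suc k) [?s, ?t])" by (simp add: concat_rep_comm del: append.simps)
    finally show ?thesis .
  qed
  ultimately have "(concat (map fw u), concat (map fw v)) \<in> pres_cong GA" using cu cv by simp
  then show ?thesis using evalH_word[of ff RA fw] by (simp add: ff_def AA_def' cls_eq_iff)
qed

lemma G_rel: "(u, v) \<in> RA \<Longrightarrow> evalH BB gg (T u) = evalH BB gg (T v)"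
proof -
  assume "(u, v) \<in> RA"
  then have uv: "u = concat (replicate k [R1, R2]) @ [R1]" "v = concat (replicate k [R2, R1]) @ [R2]"
    by (auto simp: m_alt)
  interpret B: group BB by (rule groupB)
  let ?A = "cls GR [(R1, True)]" and ?B = "cls GR [(R2, True)]"
  have Ain: "?A \<in> carrier BB" and Bin: "?B \<in> carrier BB" by (simp_all add: cB_in)
  have invA: "inv\<^bsub>BB\<^esub> ?A = cls GR [(R1, False)]"
    using pres_group_inv_gen[of "rel_M m" R1] by (simp add: B_grp_def)
  have g1: "gg R1 = ?A" by (simp add: gg_def gw_def)
  have g2: "gg R2 = inv\<^bsub>BB\<^esub> ?A \<otimes>\<^bsub>BB\<^esub> ?B" by (simp add: gg_def gw_def invA multB)
  have ggin: "\<And>x. gg x \<in> carrier BB" by (rule gg_in)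
  have relB: "?A \<otimes>\<^bsub>BB\<^esub> (?B [^]\<^bsub>BB\<^esub> k \<otimes>\<^bsub>BB\<^esub> ?A) = ?B [^]\<^bsub>BB\<^esub> Suc k"
  proof -
    let ?c = "\<lambda>x. cls GR [(x, True)]"
    have cin: "\<And>x. ?c x \<in> carrier BB" by (simp add: cB_in)
    have e: "evalH BB ?c w = cls GR w" for w using evalH_canonical[of "rel_M m" w] by (simp add: B_grp_def)
    have "(T (R1 # replicate k R2 @ [R1]), T (replicate (Suc k) R2)) \<in> pres_cong GR"
      using T_cong[OF rel_step] .
    then have "evalH BB ?c (T (R1 # replicate k R2 @ [R1])) = evalH BB ?c (T (replicate (Suc k) R2))"
      by (simp only: e cls_eq_iff)
    moreover have "evalH BB ?c (T (R1 # replicate k R2 @ [R1])) = ?A \<otimes>\<^bsub>BB\<^esub> (?B [^]\<^bsub>BB\<^esub> k \<otimes>\<^bsub>BB\<^esub> ?A)"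
      using B.evalH_append[of ?c] B.evalH_rep[of ?c] cin by simp
    moreover have "evalH BB ?c (T (replicate (Suc k) R2)) = ?B [^]\<^bsub>BB\<^esub> Suc k"
      using B.evalH_rep[of ?c] cin by blast
    ultimately show ?thesis by simp
  qed
  have "evalH BB gg (T u) = (gg R1 \<otimes>\<^bsub>BB\<^esub> gg R2) [^]\<^bsub>BB\<^esub> k \<otimes>\<^bsub>BB\<^esub> gg R1"
    using uv B.evalH_append[of gg, OF ggin] B.evalH_alt[of gg, OF ggin] ggin by simp
  also have "gg R1 \<otimes>\<^bsub>BB\<^esub> gg R2 = ?B" using g1 g2 Ain Bin by (simp add: B.m_assoc[symmetric])
  finally have lu: "evalH BB gg (T u) = ?B [^]\<^bsub>BB\<^esub> k \<otimes>\<^bsub>BB\<^esub> ?A" using g1 by simp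
  have "evalH BB gg (T v) = (gg R2 \<otimes>\<^bsub>BB\<^esub> gg R1) [^]\<^bsub>BB\<^esub> k \<otimes>\<^bsub>BB\<^esub> gg R2"
    using uv B.evalH_append[of gg, OF ggin] B.evalH_alt[of gg, OF ggin] ggin by simp
  also have "gg R2 \<otimes>\<^bsub>BB\<^esub> gg R1 = inv\<^bsub>BB\<^esub> ?A \<otimes>\<^bsub>BB\<^esub> ?B \<otimes>\<^bsub>BB\<^esub> ?A" using g1 g2 by simp
  also have "(inv\<^bsub>BB\<^esub> ?A \<otimes>\<^bsub>BB\<^esub> ?B \<otimes>\<^bsub>BB\<^esub> ?A) [^]\<^bsub>BB\<^esub> k = inv\<^bsub>BB\<^esub> ?A \<otimes>\<^bsub>BB\<^esub> ?B [^]\<^bsub>BB\<^esub> k \<otimes>\<^bsub>BB\<^esub> ?A"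
    using B.conj_pow Ain Bin by blast
  finally have "evalH BB gg (T v) = inv\<^bsub>BB\<^esub> ?A \<otimes>\<^bsub>BB\<^esub> ?B [^]\<^bsub>BB\<^esub> k \<otimes>\<^bsub>BB\<^esub> ?A \<otimes>\<^bsub>BB\<^esub> (inv\<^bsub>BB\<^esub> ?A \<otimes>\<^bsub>BB\<^esub> ?B)"
    using g2 by simp
  also have "\<dots> = inv\<^bsub>BB\<^esub> ?A \<otimes>\<^bsub>BB\<^esub> ?B [^]\<^bsub>BB\<^esub> Suc k"
    using Ain Bin by (simp add: B.m_assoc)
  also have "\<dots> = inv\<^bsub>BB\<^esub> ?A \<otimes>\<^bsub>BB\<^esub> (?A \<otimes>\<^bsub>BB\<^esub> (?B [^]\<^bsub>BB\<^esub> k \<otimes>\<^bsub>BB\<^esub> ?A))"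
    using relB by simp
  also have "\<dots> = ?B [^]\<^bsub>BB\<^esub> k \<otimes>\<^bsub>BB\<^esub> ?A" using Ain Bin by (simp add: B.m_assoc[symmetric])
  finally show ?thesis using lu by simp
qed

end



context oddm
begin

abbreviation FF where "FF \<equiv> hom_of AA ff"
abbreviation GG where "GG \<equiv> hom_of BB gg"

lemma F_hom: "FF \<in> hom BB AA"
  using hom_of_hom[OF groupA ff_in F_rel] by (simp add: B_grp_def)

lemma G_hom: "GG \<in> hom AA BB"
  using hom_of_hom[of BB gg RA, OF groupB gg_in G_rel] by (simp add: artin_I2_def)

lemma F_cls: "FF (cls GR w) = evalH AA ff w"
  by (rule hom_of_cls[OF groupA ff_in F_rel])

lemma G_cls: "GG (cls GA w) = evalH BB gg w"
  using hom_of_cls[of BB gg RA, OF groupB gg_in G_rel] by simp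

lemma FG: "x \<in> carrier AA \<Longrightarrow> FF (GG x) = x"
proof -
  assume "x \<in> carrier AA"
  then obtain w where w: "x = cls GA w" by (auto simp: carrA)
  interpret A: group AA by (rule groupA)
  interpret B: group BB by (rule groupB)
  have fg: "FF \<circ> gg = (\<lambda>x. cls GA [(x, True)])"
  proof
    fix y
    show "(FF \<circ> gg) y = cls GA [(y, True)]"
    proof (cases y)
      case R1
      then show ?thesis using cA_in[of "[(R1, True)]"] by (simp add: gg_def gw_def F_cls ff_def fw_def)
    next
      case R2
      have "(FF \<circ> gg) y = inv\<^bsub>AA\<^esub> (ff R1) \<otimes>\<^bsub>AA\<^esub> (ff R2 \<otimes>\<^bsub>AA\<^esub> \<one>\<^bsub>AA\<^esub>)"
        using R2 by (simp add: gg_def gw_def F_cls)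
      also have "\<dots> = inv\<^bsub>AA\<^esub> (ff R1) \<otimes>\<^bsub>AA\<^esub> (ff R1 \<otimes>\<^bsub>AA\<^esub> cls GA [(R2, True)])"
        by (simp add: ff_def fw_def multA cA_in)
      also have "\<dots> = cls GA [(R2, True)]" using ff_in cA_in by simp
      finally show ?thesis using R2 by simp
    qed
  qed
  have "FF (GG x) = evalH AA (FF \<circ> gg) w"
    using w G_cls B.evalH_hom[OF groupA F_hom gg_in] by simp
  also have "\<dots> = x" unfolding fg w using evalH_canonical[of RA w] by (simp add: artin_I2_def)
  finally show ?thesis .
qed

lemma GF: "x \<in> carrier BB \<Longrightarrow> GG (FF x) = x"
proof -
  assume "x \<in> carrier BB"
  then obtain w where w: "x = cls GR w" by (auto simp: carrB)
  interpret A: group AA by (rule groupA)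
  interpret B: group BB by (rule groupB)
  have gf: "GG \<circ> ff = (\<lambda>x. cls GR [(x, True)])"
  proof
    fix y
    show "(GG \<circ> ff) y = cls GR [(y, True)]"
    proof (cases y)
      case R1
      then show ?thesis using cB_in[of "[(R1, True)]"] by (simp add: ff_def fw_def G_cls gg_def gw_def)
    next
      case R2
      have "(GG \<circ> ff) y = gg R1 \<otimes>\<^bsub>BB\<^esub> (gg R2 \<otimes>\<^bsub>BB\<^esub> \<one>\<^bsub>BB\<^esub>)"
        using R2 by (simp add: ff_def fw_def G_cls)
      also have "\<dots> = cls GR ([(R1, True), (R1, False)] @ [(R2, True)])"
        by (simp add: gg_def gw_def multB cB_in)
      also have "\<dots> = cls GR ([] @ [(R2, True)])"
        using pres_cong.ctx[OF gr_cancel[of R1 True "rel_M m"], of "[]" "[(R2, True)]"]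
        by (simp only: cls_eq_iff) simp
      finally show ?thesis using R2 by simp
    qed
  qed
  have "GG (FF x) = evalH BB (GG \<circ> ff) w"
    using w F_cls A.evalH_hom[OF groupB G_hom ff_in] by simp
  also have "\<dots> = x" unfolding gf w using evalH_canonical[of "rel_M m" w] by (simp add: B_grp_def)
  finally show ?thesis .
qed

theorem iso_BA: "BB \<cong> AA"
proof (rule is_isoI)
  show "FF \<in> iso BB AA"
    unfolding iso_def
  proof (intro CollectI conjI)
    show "FF \<in> hom BB AA" by (rule F_hom)
    show "bij_betw FF (carrier BB) (carrier AA)"
    proof (rule bij_betw_byWitness[of _ GG])
      show "\<forall>a\<in>carrier BB. GG (FF a) = a" using GF by blast
      show "\<forall>a'\<in>carrier AA. FF (GG a') = a'" using FG by blast
      show "FF ` carrier BB \<subseteq> carrier AA" using F_hom by (auto simp: hom_def Pi_def)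
      show "GG ` carrier AA \<subseteq> carrier BB" using G_hom by (auto simp: hom_def Pi_def)
    qed
  qed
qed

end

theorem proposition6p3:
  fixes m :: nat
  assumes "odd m" and "m \<ge> 3"
  shows "garside_monoid (M_mon m) (Delta m)
       \<and> group_of_fractions (B_grp m) (M_mon m) (pres_incl (rel_M m))
       \<and> B_grp m \<cong> artin_I2 m"
proof -
  obtain k where k: "m = 2 * k + 1" using assms(1) oddE by blast
  then have "k \<ge> 1" using assms(2) by simp
  then interpret oddm m k using k by unfold_locales simp_all
  show ?thesis using garside_M fractions_M iso_BA by blast
qed


end
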